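(* Let $Q$ be a multiplicative equivariantly supported reflexive based quantal frame, with base locale $A$, support $\varsigma$ and $\upsilon:Q\to A$, that satisfies the unit laws, and let $G$ be its associated involutive localic graph ($\mathcal O(G_0)=A$, $\mathcal O(G_1)=Q$, $d^*(a)=a\triangleright1_Q$, $i^*(x)=x^*$, $r=d\circ i$, $u^*=\upsilon$, $G_2$ the pullback of $r$ and $d$ with $\mathcal O(G_2)=Q\otimes_AQ$, $m^*(a)=\bigvee_{xy\le a}x\otimes y$). Then $G$ is an open involutive category.
   Context: For a locale $A$, an $A$-$A$-bimodule is a sup-lattice $M$ with actions $a\triangleright m$, $m\triangleleft a$ preserving joins in each variable, with $1_A\triangleright m=m$, $(a\wedge b)\triangleright m=a\triangleright(b\triangleright m)$, $m\triangleleft1_A=m$, $m\triangleleft(a\wedge b)=(m\triangleleft a)\triangleleft b$, $(a\triangleright m)\triangleleft b=a\triangleright(m\triangleleft b)$. An $A$-$A$-quantale is such a $Q$ with associative join-preserving multiplication and $(a\triangleright x)y=a\triangleright(xy)$, $(x\triangleleft a)y=x(a\triangleright y)$, $(xy)\triangleleft a=x(y\triangleleft a)$; involutive if there is a join-preserving $x\mapsto x^*$ with $x^{**}=x$, $(xy)^*=y^*x^*$, $(a\triangleright(x\triangleleft b))^*=b\triangleright(x^*\triangleleft a)$. $1_Q$ is the top. A support is a join-preserving $\varsigma:Q\to A$ with $\varsigma(1_Q)=1_A$, $\varsigma(x)\triangleright y\le xx^*y$, $\varsigma(x)\triangleright x=x$; equivariant if $\varsigma(a\triangleright x)=a\wedge\varsigma(x)$.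 A based quantal frame is an involutive $A$-$A$-quantale which is a frame with $(a\triangleright x)\wedge y=a\triangleright(x\wedge y)$, $(x\triangleleft a)\wedge y=(x\wedge y)\triangleleft a$; reflexive: a frame homomorphism $\upsilon:Q\to A$ with $\upsilon(a\triangleright1_Q)=a=\upsilon(1_Q\triangleleft a)$. $Q\otimes_AQ$ is $Q\otimes Q$ modulo $x\otimes(a\triangleright y)=(x\triangleleft a)\otimes y$; multiplicative: the right adjoint of the induced $\mu_A:Q\otimes_AQ\to Q$ preserves joins. Unit laws: $\bigvee_{xy\le a}\upsilon(x)\triangleright y=a$ for all $a\in Q$. An open involutive category is an internal category in locales (with $u$ as units) with an involution $i$ reversing composition ($i\circ i=\mathrm{id}$, $d\circ i=r$) and with $d$ open. *)

theory Defs
  imports Main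
begin

text \<open>A locale is represented by its frame of opens. The frames A and Q are types
(complete lattices satisfying the frame law). Frames constructed as tensor products
are represented as Moore families (carriers closed under arbitrary meets) inside a
powerset, ordered by inclusion; joins in a carrier are computed as least upper bounds
in that carrier.\<close>

definition is_frame :: "'a::complete_lattice itself \<Rightarrow> bool" where
  "is_frame _ \<longleftrightarrow> (\<forall>(x::'a) S. inf x (Sup S) = (SUP s\<in>S. inf x s))"

definition cjoin :: "'x::complete_lattice set \<Rightarrow> 'x set \<Rightarrow> 'x" where
  "cjoin C S = Inf {c \<in> C. \<forall>s\<in>S. s \<le> c}"

definition frame_hom :: "'x::complete_lattice set \<Rightarrow> 'y::complete_lattice set \<Rightarrow> ('x \<Rightarrow> 'y) \<Rightarrow> bool" where
  "frame_hom C D h \<longleftrightarrow>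
     (\<forall>x\<in>C. h x \<in> D) \<and>
     h top = top \<and>
     (\<forall>x\<in>C. \<forall>y\<in>C. h (inf x y) = inf (h x) (h y)) \<and>
     (\<forall>S. S \<subseteq> C \<longrightarrow> h (cjoin C S) = cjoin D (h ` S))"

definition open_map :: "('a::complete_lattice \<Rightarrow> 'q::complete_lattice) \<Rightarrow> bool" where
  "open_map fS \<longleftrightarrow> (\<exists>e. (\<forall>x a. e x \<le> a \<longleftrightarrow> x \<le> fS a) \<and>
                          (\<forall>x a. e (inf x (fS a)) = inf (e x) a))"

definition AA_bimodule :: "('a::complete_lattice \<Rightarrow> 'q::complete_lattice \<Rightarrow> 'q) \<Rightarrow> ('q \<Rightarrow> 'a \<Rightarrow> 'q) \<Rightarrow> bool" where
  "AA_bimodule la ra \<longleftrightarrow>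
     (\<forall>a Y. la a (Sup Y) = Sup (la a ` Y)) \<and>
     (\<forall>X y. la (Sup X) y = Sup ((\<lambda>a. la a y) ` X)) \<and>
     (\<forall>x B. ra x (Sup B) = Sup (ra x ` B)) \<and>
     (\<forall>X a. ra (Sup X) a = Sup ((\<lambda>x. ra x a) ` X)) \<and>
     (\<forall>m. la top m = m) \<and>
     (\<forall>a b m. la (inf a b) m = la a (la b m)) \<and>
     (\<forall>m. ra m top = m) \<and>
     (\<forall>a b m. ra m (inf a b) = ra (ra m a) b) \<and>
     (\<forall>a b m. ra (la a m) b = la a (ra m b))"

definition AA_quantale :: "('a::complete_lattice \<Rightarrow> 'q::complete_lattice \<Rightarrow> 'q) \<Rightarrow> ('q \<Rightarrow> 'a \<Rightarrow> 'q) \<Rightarrow> ('q \<Rightarrow> 'q \<Rightarrow> 'q) \<Rightarrow> bool" where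
  "AA_quantale la ra mult \<longleftrightarrow>
     AA_bimodule la ra \<and>
     (\<forall>x y z. mult (mult x y) z = mult x (mult y z)) \<and>
     (\<forall>x Y. mult x (Sup Y) = Sup (mult x ` Y)) \<and>
     (\<forall>X y. mult (Sup X) y = Sup ((\<lambda>x. mult x y) ` X)) \<and>
     (\<forall>a x y. mult (la a x) y = la a (mult x y)) \<and>
     (\<forall>a x y. mult (ra x a) y = mult x (la a y)) \<and>
     (\<forall>a x y. ra (mult x y) a = mult x (ra y a))"

definition involutive_AA_quantale :: "('a::complete_lattice \<Rightarrow> 'q::complete_lattice \<Rightarrow> 'q) \<Rightarrow> ('q \<Rightarrow> 'a \<Rightarrow> 'q) \<Rightarrow> ('q \<Rightarrow> 'q \<Rightarrow> 'q) \<Rightarrow> ('q \<Rightarrow> 'q) \<Rightarrow> bool" where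
  "involutive_AA_quantale la ra mult star \<longleftrightarrow>
     AA_quantale la ra mult \<and>
     (\<forall>X. star (Sup X) = Sup (star ` X)) \<and>
     (\<forall>x. star (star x) = x) \<and>
     (\<forall>x y. star (mult x y) = mult (star y) (star x)) \<and>
     (\<forall>a b x. star (la a (ra x b)) = la b (ra (star x) a))"

text \<open>Support (the unit 1_Q of Q is its top element).\<close>
definition support :: "('a::complete_lattice \<Rightarrow> 'q::complete_lattice \<Rightarrow> 'q) \<Rightarrow> ('q \<Rightarrow> 'q \<Rightarrow> 'q) \<Rightarrow> ('q \<Rightarrow> 'q) \<Rightarrow> ('q \<Rightarrow> 'a) \<Rightarrow> bool" where
  "support la mult star supp \<longleftrightarrow>
     (\<forall>X. supp (Sup X) = Sup (supp ` X)) \<and>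
     supp top = top \<and>
     (\<forall>x y. la (supp x) y \<le> mult (mult x (star x)) y) \<and>
     (\<forall>x. la (supp x) x = x)"

definition equivariant_support :: "('a::complete_lattice \<Rightarrow> 'q::complete_lattice \<Rightarrow> 'q) \<Rightarrow> ('q \<Rightarrow> 'a) \<Rightarrow> bool" where
  "equivariant_support la supp \<longleftrightarrow> (\<forall>a x. supp (la a x) = inf a (supp x))"

definition based_quantal_frame :: "('a::complete_lattice \<Rightarrow> 'q::complete_lattice \<Rightarrow> 'q) \<Rightarrow> ('q \<Rightarrow> 'a \<Rightarrow> 'q) \<Rightarrow> ('q \<Rightarrow> 'q \<Rightarrow> 'q) \<Rightarrow> ('q \<Rightarrow> 'q) \<Rightarrow> bool" where
  "based_quantal_frame la ra mult star \<longleftrightarrow>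
     involutive_AA_quantale la ra mult star \<and>
     is_frame TYPE('q) \<and>
     (\<forall>a x y. inf (la a x) y = la a (inf x y)) \<and>
     (\<forall>a x y. inf (ra x a) y = ra (inf x y) a)"

definition reflexive_bqf :: "('a::complete_lattice \<Rightarrow> 'q::complete_lattice \<Rightarrow> 'q) \<Rightarrow> ('q \<Rightarrow> 'a \<Rightarrow> 'q) \<Rightarrow> ('q \<Rightarrow> 'a) \<Rightarrow> bool" where
  "reflexive_bqf la ra ups \<longleftrightarrow>
     frame_hom (UNIV::'q set) (UNIV::'a set) ups \<and>
     (\<forall>a. ups (la a top) = a) \<and> (\<forall>a. ups (ra top a) = a)"

text \<open>Elements of Q \<otimes>_A Q are represented (Joyal--Tierney) as the down-closed subsets of
Q \<times> Q that are closed under joins in each variable separately and are saturated with respect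
to the relation (x \<triangleleft> a) \<otimes> y = x \<otimes> (a \<triangleright> y); the order is inclusion.\<close>

definition tensA_ideal :: "('a::complete_lattice \<Rightarrow> 'q::complete_lattice \<Rightarrow> 'q) \<Rightarrow> ('q \<Rightarrow> 'a \<Rightarrow> 'q) \<Rightarrow> ('q \<times> 'q) set \<Rightarrow> bool" where
  "tensA_ideal la ra I \<longleftrightarrow>
     (\<forall>x y x' y'. (x, y) \<in> I \<longrightarrow> x' \<le> x \<longrightarrow> y' \<le> y \<longrightarrow> (x', y') \<in> I) \<and>
     (\<forall>X y. (\<forall>x\<in>X. (x, y) \<in> I) \<longrightarrow> (Sup X, y) \<in> I) \<and>
     (\<forall>x Y. (\<forall>y\<in>Y. (x, y) \<in> I) \<longrightarrow> (x, Sup Y) \<in> I) \<and>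
     (\<forall>x a y. (ra x a, y) \<in> I \<longleftrightarrow> (x, la a y) \<in> I)"

definition G2 :: "('a::complete_lattice \<Rightarrow> 'q::complete_lattice \<Rightarrow> 'q) \<Rightarrow> ('q \<Rightarrow> 'a \<Rightarrow> 'q) \<Rightarrow> ('q \<times> 'q) set set" where
  "G2 la ra = {I. tensA_ideal la ra I}"

definition tensA :: "('a::complete_lattice \<Rightarrow> 'q::complete_lattice \<Rightarrow> 'q) \<Rightarrow> ('q \<Rightarrow> 'a \<Rightarrow> 'q) \<Rightarrow> 'q \<Rightarrow> 'q \<Rightarrow> ('q \<times> 'q) set" where
  "tensA la ra x y = \<Inter>{I. tensA_ideal la ra I \<and> (x, y) \<in> I}"

definition pi1 :: "('a::complete_lattice \<Rightarrow> 'q::complete_lattice \<Rightarrow> 'q) \<Rightarrow> ('q \<Rightarrow> 'a \<Rightarrow> 'q) \<Rightarrow> 'q \<Rightarrow> ('q \<times> 'q) set" where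
  "pi1 la ra x = tensA la ra x top"

definition pi2 :: "('a::complete_lattice \<Rightarrow> 'q::complete_lattice \<Rightarrow> 'q) \<Rightarrow> ('q \<Rightarrow> 'a \<Rightarrow> 'q) \<Rightarrow> 'q \<Rightarrow> ('q \<times> 'q) set" where
  "pi2 la ra y = tensA la ra top y"

definition mS :: "('a::complete_lattice \<Rightarrow> 'q::complete_lattice \<Rightarrow> 'q) \<Rightarrow> ('q \<Rightarrow> 'a \<Rightarrow> 'q) \<Rightarrow> ('q \<Rightarrow> 'q \<Rightarrow> 'q) \<Rightarrow> 'q \<Rightarrow> ('q \<times> 'q) set" where
  "mS la ra mult a = cjoin (G2 la ra) {tensA la ra x y | x y. mult x y \<le> a}"

definition dS :: "('a::complete_lattice \<Rightarrow> 'q::complete_lattice \<Rightarrow> 'q) \<Rightarrow> 'a \<Rightarrow> 'q" where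
  "dS la a = la a top"

definition muA :: "('q::complete_lattice \<Rightarrow> 'q \<Rightarrow> 'q) \<Rightarrow> ('q \<times> 'q) set \<Rightarrow> 'q" where
  "muA mult I = Sup {mult x y | x y. (x, y) \<in> I}"

definition multiplicative :: "('a::complete_lattice \<Rightarrow> 'q::complete_lattice \<Rightarrow> 'q) \<Rightarrow> ('q \<Rightarrow> 'a \<Rightarrow> 'q) \<Rightarrow> ('q \<Rightarrow> 'q \<Rightarrow> 'q) \<Rightarrow> bool" where
  "multiplicative la ra mult \<longleftrightarrow>
     (\<exists>\<rho>. (\<forall>a. \<rho> a \<in> G2 la ra) \<and>
          (\<forall>I\<in>G2 la ra. \<forall>a. muA mult I \<le> a \<longleftrightarrow> I \<subseteq> \<rho> a) \<and>
          (\<forall>S. \<rho> (Sup S) = cjoin (G2 la ra) (\<rho> ` S)))"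

definition unit_laws :: "('a::complete_lattice \<Rightarrow> 'q::complete_lattice \<Rightarrow> 'q) \<Rightarrow> ('q \<Rightarrow> 'q \<Rightarrow> 'q) \<Rightarrow> ('q \<Rightarrow> 'a) \<Rightarrow> bool" where
  "unit_laws la mult ups \<longleftrightarrow> (\<forall>a. Sup {la (ups x) y | x y. mult x y \<le> a} = a)"

section \<open>The triple tensor Q \<otimes>_A Q \<otimes>_A Q (frame of G_3 = G_1 \<times>_{G_0} G_1 \<times>_{G_0} G_1)\<close>

definition tens3_ideal :: "('a::complete_lattice \<Rightarrow> 'q::complete_lattice \<Rightarrow> 'q) \<Rightarrow> ('q \<Rightarrow> 'a \<Rightarrow> 'q) \<Rightarrow> ('q \<times> 'q \<times> 'q) set \<Rightarrow> bool" where
  "tens3_ideal la ra J \<longleftrightarrow>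
     (\<forall>x y z x' y' z'. (x, y, z) \<in> J \<longrightarrow> x' \<le> x \<longrightarrow> y' \<le> y \<longrightarrow> z' \<le> z \<longrightarrow> (x', y', z') \<in> J) \<and>
     (\<forall>X y z. (\<forall>x\<in>X. (x, y, z) \<in> J) \<longrightarrow> (Sup X, y, z) \<in> J) \<and>
     (\<forall>x Y z. (\<forall>y\<in>Y. (x, y, z) \<in> J) \<longrightarrow> (x, Sup Y, z) \<in> J) \<and>
     (\<forall>x y Z. (\<forall>z\<in>Z. (x, y, z) \<in> J) \<longrightarrow> (x, y, Sup Z) \<in> J) \<and>
     (\<forall>x a y z. (ra x a, y, z) \<in> J \<longleftrightarrow> (x, la a y, z) \<in> J) \<and>
     (\<forall>x a y z. (x, ra y a, z) \<in> J \<longleftrightarrow> (x, y, la a z) \<in> J)"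

definition G3 :: "('a::complete_lattice \<Rightarrow> 'q::complete_lattice \<Rightarrow> 'q) \<Rightarrow> ('q \<Rightarrow> 'a \<Rightarrow> 'q) \<Rightarrow> ('q \<times> 'q \<times> 'q) set set" where
  "G3 la ra = {J. tens3_ideal la ra J}"

definition p12 :: "('a::complete_lattice \<Rightarrow> 'q::complete_lattice \<Rightarrow> 'q) \<Rightarrow> ('q \<Rightarrow> 'a \<Rightarrow> 'q) \<Rightarrow> ('q \<times> 'q) set \<Rightarrow> ('q \<times> 'q \<times> 'q) set" where
  "p12 la ra I = \<Inter>{J. tens3_ideal la ra J \<and> {(x, y, z). (x, y) \<in> I} \<subseteq> J}"

definition p23 :: "('a::complete_lattice \<Rightarrow> 'q::complete_lattice \<Rightarrow> 'q) \<Rightarrow> ('q \<Rightarrow> 'a \<Rightarrow> 'q) \<Rightarrow> ('q \<times> 'q) set \<Rightarrow> ('q \<times> 'q \<times> 'q) set" where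
  "p23 la ra I = \<Inter>{J. tens3_ideal la ra J \<and> {(x, y, z). (y, z) \<in> I} \<subseteq> J}"

text \<open>h is (the inverse image of) the pairing \<langle>f, g\<rangle> into the pullback G_2, i.e.
h \<circ> \<pi>_1^* = f^* and h \<circ> \<pi>_2^* = g^*.\<close>
definition is_pairing :: "'p::complete_lattice set \<Rightarrow> ('q \<Rightarrow> 'p) \<Rightarrow> ('q \<Rightarrow> 'p) \<Rightarrow> 'y::complete_lattice set
      \<Rightarrow> ('q \<Rightarrow> 'y) \<Rightarrow> ('q \<Rightarrow> 'y) \<Rightarrow> ('p \<Rightarrow> 'y) \<Rightarrow> bool" where
  "is_pairing P p1 p2 Y fS gS h \<longleftrightarrow> frame_hom P Y h \<and> h \<circ> p1 = fS \<and> h \<circ> p2 = gS"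

definition induced_law :: "(('p \<Rightarrow> 'y) \<Rightarrow> bool) \<Rightarrow> (('p \<Rightarrow> 'y) \<Rightarrow> bool) \<Rightarrow> bool" where
  "induced_law P L \<longleftrightarrow> (\<exists>h. P h) \<and> (\<forall>h. P h \<longrightarrow> L h)"

text \<open>Involutive localic graph given by inverse images: G_0 with frame 'a, G_1 with frame 'q,
G_2 with frame carrier P2 and projections pr1, pr2, G_3 with frame carrier P3 and projections
q12, q23 : G_3 \<rightarrow> G_2; source d, unit u, multiplication m, involution i; r = d \<circ> i.
Composition of locale maps is reversed on inverse images.\<close>
definition open_involutive_category ::
  "'p::complete_lattice set \<Rightarrow> ('q::complete_lattice \<Rightarrow> 'p) \<Rightarrow> ('q \<Rightarrow> 'p) \<Rightarrow>
   't::complete_lattice set \<Rightarrow> ('p \<Rightarrow> 't) \<Rightarrow> ('p \<Rightarrow> 't) \<Rightarrow>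
   ('a::complete_lattice \<Rightarrow> 'q) \<Rightarrow> ('q \<Rightarrow> 'a) \<Rightarrow> ('q \<Rightarrow> 'p) \<Rightarrow> ('q \<Rightarrow> 'q) \<Rightarrow> bool" where
  "open_involutive_category P2 pr1 pr2 P3 q12 q23 dS' uS mS' iS \<longleftrightarrow>
     (let rS = iS \<circ> dS' in
       \<comment> \<open>structure maps are locale maps\<close>
       frame_hom (UNIV::'a set) (UNIV::'q set) dS' \<and>
       frame_hom (UNIV::'q set) (UNIV::'a set) uS \<and>
       frame_hom (UNIV::'q set) P2 mS' \<and>
       frame_hom (UNIV::'q set) (UNIV::'q set) iS \<and>
       \<comment> \<open>d \<circ> u = id, r \<circ> u = id\<close>
       uS \<circ> dS' = id \<and> uS \<circ> rS = id \<and>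
       \<comment> \<open>d \<circ> m = d \<circ> \<pi>_1, r \<circ> m = r \<circ> \<pi>_2\<close>
       mS' \<circ> dS' = pr1 \<circ> dS' \<and> mS' \<circ> rS = pr2 \<circ> rS \<and>
       \<comment> \<open>m \<circ> \<langle>u \<circ> d, id\<rangle> = id\<close>
       induced_law (is_pairing P2 pr1 pr2 (UNIV::'q set) (dS' \<circ> uS) id) (\<lambda>h. h \<circ> mS' = id) \<and>
       \<comment> \<open>m \<circ> \<langle>id, u \<circ> r\<rangle> = id\<close>
       induced_law (is_pairing P2 pr1 pr2 (UNIV::'q set) id (rS \<circ> uS)) (\<lambda>h. h \<circ> mS' = id) \<and>
       \<comment> \<open>associativity: m \<circ> (m \<times> id) = m \<circ> (id \<times> m), where
           m \<times> id = \<langle>m \<circ> p_12, p_3\<rangle> and id \<times> m = \<langle>p_1, m \<circ> p_23\<rangle>\<close>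
       (\<exists>h1. is_pairing P2 pr1 pr2 P3 (q12 \<circ> mS') (q23 \<circ> pr2) h1) \<and>
       (\<exists>h2. is_pairing P2 pr1 pr2 P3 (q12 \<circ> pr1) (q23 \<circ> mS') h2) \<and>
       (\<forall>h1 h2. is_pairing P2 pr1 pr2 P3 (q12 \<circ> mS') (q23 \<circ> pr2) h1 \<longrightarrow>
                is_pairing P2 pr1 pr2 P3 (q12 \<circ> pr1) (q23 \<circ> mS') h2 \<longrightarrow>
                h1 \<circ> mS' = h2 \<circ> mS') \<and>
       \<comment> \<open>involution: i \<circ> i = id, d \<circ> i = r, i \<circ> m = m \<circ> \<langle>i \<circ> \<pi>_2, i \<circ> \<pi>_1\<rangle>\<close>
       iS \<circ> iS = id \<and> iS \<circ> dS' = rS \<and>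
       induced_law (is_pairing P2 pr1 pr2 P2 (pr2 \<circ> iS) (pr1 \<circ> iS)) (\<lambda>h. mS' \<circ> iS = h \<circ> mS') \<and>
       \<comment> \<open>d is open\<close>
       open_map dS')"

end

theory Submission
  imports Defs
begin



lemma Sup_pres_mono:
  fixes f :: "'x::complete_lattice \<Rightarrow> 'y::complete_lattice"
  assumes "\<And>X. f (Sup X) = Sup (f ` X)" "x \<le> y"
  shows "f x \<le> f y"
proof -
  have "Sup {x, y} = y" using assms(2) by (simp add: sup_absorb2)
  hence "f y = Sup {f x, f y}" using assms(1)[of "{x,y}"] by simp
  thus ?thesis by (metis Sup_insert le_supI1 order_refl sup.order_iff Sup_empty sup_bot.right_neutral ccpo_Sup_singleton insert_is_Un le_sup_iff Sup_upper insertI1)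
qed

lemma img_Collect2: "f ` {g x y | x y. P x y} = {f (g x y) | x y. P x y}" by blast

lemma cjoin_UNIV: "cjoin UNIV S = Sup S"
  unfolding cjoin_def by (rule antisym) (auto intro: Inf_lower Sup_least Inf_greatest Sup_upper)

locale BQF =
  fixes la :: "'a::complete_lattice \<Rightarrow> 'q::complete_lattice \<Rightarrow> 'q"
    and ra :: "'q \<Rightarrow> 'a \<Rightarrow> 'q"
    and mult :: "'q \<Rightarrow> 'q \<Rightarrow> 'q"
    and star :: "'q \<Rightarrow> 'q"
    and supp :: "'q \<Rightarrow> 'a"
    and ups :: "'q \<Rightarrow> 'a"
  assumes hA: "is_frame TYPE('a)"
    and hB: "based_quantal_frame la ra mult star"
    and hS: "support la mult star supp"
    and hE: "equivariant_support la supp"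
    and hR: "reflexive_bqf la ra ups"
    and hM: "multiplicative la ra mult"
    and hU: "unit_laws la mult ups"
begin

lemma la_SupR: "la a (Sup Y) = Sup (la a ` Y)" using hB
  unfolding based_quantal_frame_def involutive_AA_quantale_def AA_quantale_def AA_bimodule_def by simp
lemma la_SupL: "la (Sup X) y = Sup ((\<lambda>a. la a y) ` X)" using hB
  unfolding based_quantal_frame_def involutive_AA_quantale_def AA_quantale_def AA_bimodule_def by simp
lemma ra_SupR: "ra x (Sup B) = Sup (ra x ` B)" using hB
  unfolding based_quantal_frame_def involutive_AA_quantale_def AA_quantale_def AA_bimodule_def by simp
lemma ra_SupL: "ra (Sup X) a = Sup ((\<lambda>x. ra x a) ` X)" using hB
  unfolding based_quantal_frame_def involutive_AA_quantale_def AA_quantale_def AA_bimodule_def by simp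
lemma la_top[simp]: "la top m = m" using hB
  unfolding based_quantal_frame_def involutive_AA_quantale_def AA_quantale_def AA_bimodule_def by simp
lemma la_inf: "la (inf a b) m = la a (la b m)" using hB
  unfolding based_quantal_frame_def involutive_AA_quantale_def AA_quantale_def AA_bimodule_def by simp
lemma ra_top[simp]: "ra m top = m" using hB
  unfolding based_quantal_frame_def involutive_AA_quantale_def AA_quantale_def AA_bimodule_def by simp
lemma ra_inf: "ra m (inf a b) = ra (ra m a) b" using hB
  unfolding based_quantal_frame_def involutive_AA_quantale_def AA_quantale_def AA_bimodule_def by simp
lemma la_ra: "ra (la a m) b = la a (ra m b)" using hB
  unfolding based_quantal_frame_def involutive_AA_quantale_def AA_quantale_def AA_bimodule_def by simp
lemma mult_assoc: "mult (mult x y) z = mult x (mult y z)" using hB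
  unfolding based_quantal_frame_def involutive_AA_quantale_def AA_quantale_def by simp
lemma mult_SupR: "mult x (Sup Y) = Sup (mult x ` Y)" using hB
  unfolding based_quantal_frame_def involutive_AA_quantale_def AA_quantale_def by simp
lemma mult_SupL: "mult (Sup X) y = Sup ((\<lambda>x. mult x y) ` X)" using hB
  unfolding based_quantal_frame_def involutive_AA_quantale_def AA_quantale_def by simp
lemma mult_la: "mult (la a x) y = la a (mult x y)" using hB
  unfolding based_quantal_frame_def involutive_AA_quantale_def AA_quantale_def by simp
lemma mult_ra: "mult (ra x a) y = mult x (la a y)" using hB
  unfolding based_quantal_frame_def involutive_AA_quantale_def AA_quantale_def by simp
lemma ra_mult: "ra (mult x y) a = mult x (ra y a)" using hB
  unfolding based_quantal_frame_def involutive_AA_quantale_def AA_quantale_def by simp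
lemma star_Sup: "star (Sup X) = Sup (star ` X)" using hB
  unfolding based_quantal_frame_def involutive_AA_quantale_def by simp
lemma star_star[simp]: "star (star x) = x" using hB
  unfolding based_quantal_frame_def involutive_AA_quantale_def by simp
lemma star_mult: "star (mult x y) = mult (star y) (star x)" using hB
  unfolding based_quantal_frame_def involutive_AA_quantale_def by simp
lemma star_lara: "star (la a (ra x b)) = la b (ra (star x) a)" using hB
  unfolding based_quantal_frame_def involutive_AA_quantale_def by simp
lemma frameQ: "inf x (Sup S) = (SUP s\<in>S. inf x s)" for x :: 'q using hB
  unfolding based_quantal_frame_def is_frame_def by blast
lemma la_inf_comm: "inf (la a x) y = la a (inf x y)" using hB
  unfolding based_quantal_frame_def by blast
lemma ra_inf_comm: "inf (ra x a) y = ra (inf x y) a" using hB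
  unfolding based_quantal_frame_def by blast
lemma supp_Sup: "supp (Sup X) = Sup (supp ` X)" using hS unfolding support_def by blast
lemma supp_top[simp]: "supp top = top" using hS unfolding support_def by blast
lemma supp_le: "la (supp x) y \<le> mult (mult x (star x)) y" using hS unfolding support_def by blast
lemma supp_self: "la (supp x) x = x" using hS unfolding support_def by blast
lemma supp_la: "supp (la a x) = inf a (supp x)" using hE unfolding equivariant_support_def by blast
lemma ups_hom: "frame_hom UNIV UNIV ups" using hR unfolding reflexive_bqf_def by blast
lemma ups_la[simp]: "ups (la a top) = a" using hR unfolding reflexive_bqf_def by blast
lemma ups_ra[simp]: "ups (ra top a) = a" using hR unfolding reflexive_bqf_def by blast
lemma ups_inf: "ups (inf x y) = inf (ups x) (ups y)" using ups_hom unfolding frame_hom_def by blast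
lemma ups_Sup: "ups (Sup X) = Sup (ups ` X)" using ups_hom unfolding frame_hom_def by (simp add: cjoin_UNIV)
lemma unitlaw: "Sup {la (ups x) y | x y. mult x y \<le> a} = a" using hU unfolding unit_laws_def by blast

lemma la_mono: "a \<le> b \<Longrightarrow> x \<le> y \<Longrightarrow> la a x \<le> la b y"
proof -
  assume "a \<le> b" "x \<le> y"
  have "la a x \<le> la b x" using Sup_pres_mono[of "\<lambda>a. la a x"] la_SupL \<open>a \<le> b\<close> by blast
  also have "\<dots> \<le> la b y" using Sup_pres_mono[of "la b"] la_SupR \<open>x \<le> y\<close> by blast
  finally show ?thesis .
qed
lemma ra_mono: "x \<le> y \<Longrightarrow> a \<le> b \<Longrightarrow> ra x a \<le> ra y b"
proof -
  assume "x \<le> y" "a \<le> b"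
  have "ra x a \<le> ra y a" using Sup_pres_mono[of "\<lambda>x. ra x a"] ra_SupL \<open>x \<le> y\<close> by blast
  also have "\<dots> \<le> ra y b" using Sup_pres_mono[of "ra y"] ra_SupR \<open>a \<le> b\<close> by blast
  finally show ?thesis .
qed
lemma mult_mono: "x \<le> y \<Longrightarrow> x' \<le> y' \<Longrightarrow> mult x x' \<le> mult y y'"
proof -
  assume "x \<le> y" "x' \<le> y'"
  have "mult x x' \<le> mult y x'" using Sup_pres_mono[of "\<lambda>x. mult x x'"] mult_SupL \<open>x \<le> y\<close> by blast
  also have "\<dots> \<le> mult y y'" using Sup_pres_mono[of "mult y"] mult_SupR \<open>x' \<le> y'\<close> by blast
  finally show ?thesis .
qed
lemma star_mono: "x \<le> y \<Longrightarrow> star x \<le> star y"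
  using Sup_pres_mono[of star] star_Sup by blast
lemma star_le_iff: "star x \<le> star y \<longleftrightarrow> x \<le> y"
  by (metis star_mono star_star)
lemma star_le_iff2: "star x \<le> y \<longleftrightarrow> x \<le> star y"
  by (metis star_mono star_star)
lemma supp_mono: "x \<le> y \<Longrightarrow> supp x \<le> supp y"
  using Sup_pres_mono[of supp] supp_Sup by blast
lemma ups_mono: "x \<le> y \<Longrightarrow> ups x \<le> ups y"
  using Sup_pres_mono[of ups] ups_Sup by blast

lemma star_top[simp]: "star top = top"
  by (metis star_le_iff2 top.extremum top.extremum_unique)
lemma star_la: "star (la a x) = ra (star x) a"
  using star_lara[of a x top] by simp
lemma star_ra: "star (ra x b) = la b (star x)"
  using star_lara[of top x b] by simp
lemma la_eq: "la a y = inf (la a top) y"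
  using la_inf_comm[of a top y] by simp
lemma ra_eq: "ra y a = inf (ra top a) y"
  using ra_inf_comm[of top a y] by simp
lemma la_le: "la a y \<le> y" by (metis la_eq inf.cobounded2)
lemma ra_le: "ra y a \<le> y" by (metis ra_eq inf.cobounded2)
lemma la_idem: "y \<le> la a top \<Longrightarrow> la a y = y"
  by (metis inf.absorb2 la_eq)
lemma ra_idem: "y \<le> ra top a \<Longrightarrow> ra y a = y"
  by (metis inf.absorb2 ra_eq)

lemma supp_adj: "supp x \<le> a \<longleftrightarrow> x \<le> la a top"
proof
  assume "supp x \<le> a"
  have "x = la (supp x) x" by (simp add: supp_self)
  also have "\<dots> \<le> la a top" by (rule la_mono) (use \<open>supp x \<le> a\<close> in auto)
  finally show "x \<le> la a top" .
next
  assume "x \<le> la a top"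
  hence "supp x \<le> supp (la a top)" by (rule supp_mono)
  thus "supp x \<le> a" by (simp add: supp_la)
qed

definition tau where "tau x = supp (star x)"

lemma tau_adj: "tau x \<le> a \<longleftrightarrow> x \<le> ra top a"
  unfolding tau_def supp_adj by (metis star_le_iff2 star_la star_top)

lemma ra_tau_self: "ra x (tau x) = x"
  unfolding tau_def by (metis star_la star_star supp_self)

lemma tau_ra: "tau (ra x a) = inf a (tau x)"
  unfolding tau_def by (simp add: star_ra supp_la)

lemma le_mult_top: "x \<le> mult x top"
proof -
  have "x = la (supp x) x" by (simp add: supp_self)
  also have "\<dots> \<le> mult (mult x (star x)) x" by (rule supp_le)
  also have "\<dots> = mult x (mult (star x) x)" by (rule mult_assoc)
  also have "\<dots> \<le> mult x top" by (rule mult_mono) auto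
  finally show ?thesis .
qed

lemma supp_mult_le: "supp (mult x y) \<le> supp x"
proof -
  have "mult x top = la (supp x) (mult x top)" by (metis mult_la supp_self)
  hence "mult x top \<le> la (supp x) top" by (metis la_mono order_refl top_greatest)
  hence "supp (mult x top) \<le> supp x" by (simp add: supp_adj)
  moreover have "supp (mult x y) \<le> supp (mult x top)" by (intro supp_mono mult_mono) auto
  ultimately show ?thesis by simp
qed

lemma supp_mult: "supp (mult x y) = supp (ra x (supp y))"
proof (rule antisym)
  have "mult x y = mult (ra x (supp y)) y" by (simp add: mult_ra supp_self)
  thus "supp (mult x y) \<le> supp (ra x (supp y))" by (metis supp_mult_le)
next
  have "ra x (supp y) \<le> mult (ra x (supp y)) top" by (rule le_mult_top)
  also have "\<dots> = mult x (la (supp y) top)" by (rule mult_ra)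
  also have "\<dots> \<le> mult x (mult (mult y (star y)) top)" by (intro mult_mono supp_le) auto
  also have "\<dots> = mult (mult x y) (mult (star y) top)" by (simp add: mult_assoc)
  finally have "supp (ra x (supp y)) \<le> supp (mult (mult x y) (mult (star y) top))" by (rule supp_mono)
  also have "\<dots> \<le> supp (mult x y)" by (rule supp_mult_le)
  finally show "supp (ra x (supp y)) \<le> supp (mult x y)" .
qed

lemma tau_mult: "tau (mult x y) = tau (la (tau x) y)"
  unfolding tau_def by (simp add: star_mult supp_mult star_la)

lemma tau_mult_le: "tau (mult x y) \<le> tau y"
  unfolding tau_def by (simp add: star_mult supp_mult_le)

lemma ups_la_gen: "ups (la a x) = inf a (ups x)"
  by (metis la_eq ups_inf ups_la)
lemma ups_ra_gen: "ups (ra x a) = inf (ups x) a"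
  by (metis ra_eq ups_inf ups_ra inf_commute)


lemma ups_star: "ups (star a) = ups a"
proof -
  have s1: "star ` {la (ups x) y | x y. mult x y \<le> a} = {ra (star y) (ups x) | x y. mult x y \<le> a}"
    by (simp add: img_Collect2 star_la)
  have "ups (star a) = ups (star (Sup {la (ups x) y | x y. mult x y \<le> a}))" by (simp add: unitlaw)
  also have "\<dots> = Sup (ups ` {ra (star y) (ups x) | x y. mult x y \<le> a})" by (simp add: star_Sup s1 ups_Sup)
  also have "ups ` {ra (star y) (ups x) | x y. mult x y \<le> a} = {inf (ups (star y)) (ups x) | x y. mult x y \<le> a}"
    by (simp add: img_Collect2 ups_ra_gen)
  finally have e1: "ups (star a) = Sup {inf (ups (star y)) (ups x) | x y. mult x y \<le> a}" .
  have s2: "star ` {la (ups p) q | p q. mult p q \<le> star a} = {ra x (ups (star y)) | x y. mult x y \<le> a}"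
  proof safe
    fix p q assume "mult p q \<le> star a"
    hence "mult (star q) (star p) \<le> a" by (metis star_le_iff2 star_mult)
    thus "\<exists>x y. star (la (ups p) q) = ra x (ups (star y)) \<and> mult x y \<le> a"
      by (intro exI[of _ "star q"] exI[of _ "star p"]) (simp add: star_la)
  next
    fix x y assume "mult x y \<le> a"
    hence "mult (star y) (star x) \<le> star a" by (metis star_le_iff star_mult)
    thus "ra x (ups (star y)) \<in> star ` {la (ups p) q | p q. mult p q \<le> star a}"
      by (intro image_eqI[of _ _ "la (ups (star y)) (star x)"]) (auto simp: star_la)
  qed
  have "ups a = ups (star (star a))" by simp
  also have "\<dots> = ups (star (Sup {la (ups p) q | p q. mult p q \<le> star a}))" by (simp add: unitlaw)
  also have "\<dots> = Sup (ups ` {ra x (ups (star y)) | x y. mult x y \<le> a})" by (simp add: star_Sup s2 ups_Sup)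
  also have "ups ` {ra x (ups (star y)) | x y. mult x y \<le> a} = {inf (ups (star y)) (ups x) | x y. mult x y \<le> a}"
    by (simp add: img_Collect2 ups_ra_gen inf_commute)
  finally show ?thesis using e1 by simp
qed

lemma unitlaw_right: "Sup {ra x (ups y) | x y. mult x y \<le> a} = a"
proof -
  have s2: "star ` {la (ups p) q | p q. mult p q \<le> star a} = {ra x (ups y) | x y. mult x y \<le> a}"
  proof safe
    fix p q assume "mult p q \<le> star a"
    hence "mult (star q) (star p) \<le> a" by (metis star_le_iff2 star_mult)
    thus "\<exists>x y. star (la (ups p) q) = ra x (ups y) \<and> mult x y \<le> a"
      by (intro exI[of _ "star q"] exI[of _ "star p"]) (simp add: star_la ups_star)
  next
    fix x y assume "mult x y \<le> a"
    hence "mult (star y) (star x) \<le> star a" by (metis star_le_iff star_mult)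
    hence "la (ups (star y)) (star x) \<in> {la (ups p) q | p q. mult p q \<le> star a}" by blast
    moreover have "ra x (ups y) = star (la (ups (star y)) (star x))" by (simp add: star_la ups_star)
    ultimately show "ra x (ups y) \<in> star ` {la (ups p) q | p q. mult p q \<le> star a}" by blast
  qed
  have "a = star (star a)" by simp
  also have "\<dots> = star (Sup {la (ups p) q | p q. mult p q \<le> star a})" by (simp add: unitlaw)
  also have "\<dots> = Sup {ra x (ups y) | x y. mult x y \<le> a}" by (simp add: star_Sup s2)
  finally show ?thesis by simp
qed

end



lemma cjoin_upper: "s \<in> S \<Longrightarrow> s \<subseteq> cjoin C S"
  unfolding cjoin_def by auto
lemma cjoin_least: "c \<in> C \<Longrightarrow> (\<forall>s\<in>S. s \<subseteq> c) \<Longrightarrow> cjoin C S \<subseteq> c"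
  unfolding cjoin_def by auto
lemma cjoin_eq: "cjoin C S = \<Inter>{c \<in> C. \<forall>s\<in>S. s \<subseteq> c}"
  unfolding cjoin_def by simp

context BQF begin

abbreviation "idl \<equiv> tensA_ideal la ra"

lemma idl_down: "idl I \<Longrightarrow> (x, y) \<in> I \<Longrightarrow> x' \<le> x \<Longrightarrow> y' \<le> y \<Longrightarrow> (x', y') \<in> I"
  unfolding tensA_ideal_def by (drule conjunct1) blast
lemma idl_supL: "idl I \<Longrightarrow> (\<And>x. x\<in>X \<Longrightarrow> (x, y) \<in> I) \<Longrightarrow> (Sup X, y) \<in> I"
  unfolding tensA_ideal_def by (drule conjunct2, drule conjunct1) blast
lemma idl_supR: "idl I \<Longrightarrow> (\<And>y. y\<in>Y \<Longrightarrow> (x, y) \<in> I) \<Longrightarrow> (x, Sup Y) \<in> I"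
  unfolding tensA_ideal_def by (drule conjunct2, drule conjunct2, drule conjunct1) blast
lemma idl_sat: "idl I \<Longrightarrow> (ra x a, y) \<in> I \<longleftrightarrow> (x, la a y) \<in> I"
  unfolding tensA_ideal_def by (drule conjunct2, drule conjunct2, drule conjunct2) blast
lemma idlI:
  assumes "\<And>x y x' y'. (x, y) \<in> I \<Longrightarrow> x' \<le> x \<Longrightarrow> y' \<le> y \<Longrightarrow> (x', y') \<in> I"
    and "\<And>X y. (\<And>x. x\<in>X \<Longrightarrow> (x, y) \<in> I) \<Longrightarrow> (Sup X, y) \<in> I"
    and "\<And>x Y. (\<And>y. y\<in>Y \<Longrightarrow> (x, y) \<in> I) \<Longrightarrow> (x, Sup Y) \<in> I"
    and "\<And>x a y. (ra x a, y) \<in> I \<longleftrightarrow> (x, la a y) \<in> I"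
  shows "idl I"
  unfolding tensA_ideal_def using assms by (intro conjI allI impI) simp_all

lemma idl_Inter: assumes F: "\<And>I. I \<in> F \<Longrightarrow> idl I" shows "idl (\<Inter>F)"
proof (rule idlI)
  fix x y x' y' assume h: "(x, y) \<in> \<Inter>F" "x' \<le> x" "y' \<le> y"
  show "(x', y') \<in> \<Inter>F"
  proof (rule InterI)
    fix I assume "I \<in> F" thus "(x', y') \<in> I" using idl_down[OF F[OF \<open>I \<in> F\<close>] _ h(2,3)] h(1) by blast
  qed
next
  fix X y assume h: "\<And>x. x \<in> X \<Longrightarrow> (x, y) \<in> \<Inter>F"
  show "(Sup X, y) \<in> \<Inter>F"
  proof (rule InterI)
    fix I assume "I \<in> F" thus "(Sup X, y) \<in> I" using idl_supL[OF F[OF \<open>I \<in> F\<close>]] h by blast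
  qed
next
  fix x Y assume h: "\<And>y. y \<in> Y \<Longrightarrow> (x, y) \<in> \<Inter>F"
  show "(x, Sup Y) \<in> \<Inter>F"
  proof (rule InterI)
    fix I assume "I \<in> F" thus "(x, Sup Y) \<in> I" using idl_supR[OF F[OF \<open>I \<in> F\<close>]] h by blast
  qed
next
  fix x a y show "(ra x a, y) \<in> \<Inter>F \<longleftrightarrow> (x, la a y) \<in> \<Inter>F"
    using idl_sat[OF F] by blast
qed

lemma G2_iff: "I \<in> G2 la ra \<longleftrightarrow> idl I" unfolding G2_def by simp

lemma cjoin_G2: "cjoin (G2 la ra) S \<in> G2 la ra"
  unfolding cjoin_eq G2_iff by (rule idl_Inter) (auto simp: G2_iff)

lemma idl_cjoin: "idl (cjoin (G2 la ra) S)"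
  using cjoin_G2 G2_iff by blast

lemma cjoin_G2_least: "idl c \<Longrightarrow> (\<And>s. s\<in>S \<Longrightarrow> s \<subseteq> c) \<Longrightarrow> cjoin (G2 la ra) S \<subseteq> c"
  by (rule cjoin_least) (auto simp: G2_iff)

lemma idl_UNIV: "idl UNIV" by (rule idlI) auto

lemma tensA_mem: "(x, y) \<in> tensA la ra x y"
  unfolding tensA_def by auto
lemma tensA_idl: "idl (tensA la ra x y)"
  unfolding tensA_def by (rule idl_Inter) auto
lemma tensA_least: "idl I \<Longrightarrow> (x, y) \<in> I \<Longrightarrow> tensA la ra x y \<subseteq> I"
  unfolding tensA_def by auto

definition Emb where "Emb x y = {(u, v). ra u (supp v) \<le> x \<and> la (tau u) v \<le> y}"

lemma tau_mono: "x \<le> y \<Longrightarrow> tau x \<le> tau y"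
  unfolding tau_def by (intro supp_mono star_mono)
lemma tau_Sup: "tau (Sup X) = Sup (tau ` X)"
  unfolding tau_def by (simp add: star_Sup supp_Sup image_image)

lemma Emb_idl: "idl (Emb x y)"
proof (rule idlI)
  fix u v u' v' assume "(u, v) \<in> Emb x y" "u' \<le> u" "v' \<le> v"
  moreover have "ra u' (supp v') \<le> ra u (supp v)" by (intro ra_mono supp_mono) fact+
  moreover have "la (tau u') v' \<le> la (tau u) v" by (intro la_mono tau_mono) fact+
  ultimately show "(u', v') \<in> Emb x y" unfolding Emb_def by auto
next
  fix U v assume h: "\<And>u. u \<in> U \<Longrightarrow> (u, v) \<in> Emb x y"
  have "ra (Sup U) (supp v) \<le> x" unfolding ra_SupL using h by (auto simp: Emb_def intro!: SUP_least)
  moreover have "la (tau (Sup U)) v \<le> y" unfolding tau_Sup la_SupL image_image using h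
    by (auto simp: Emb_def intro!: SUP_least)
  ultimately show "(Sup U, v) \<in> Emb x y" by (simp add: Emb_def)
next
  fix u V assume h: "\<And>v. v \<in> V \<Longrightarrow> (u, v) \<in> Emb x y"
  have "ra u (supp (Sup V)) \<le> x" unfolding supp_Sup ra_SupR image_image using h by (auto simp: Emb_def intro!: SUP_least)
  moreover have "la (tau u) (Sup V) \<le> y" unfolding la_SupR using h
    by (auto simp: Emb_def intro!: SUP_least)
  ultimately show "(u, Sup V) \<in> Emb x y" by (simp add: Emb_def)
next
  fix u a v
  have "ra (ra u a) (supp v) = ra u (supp (la a v))" by (simp add: ra_inf[symmetric] supp_la)
  moreover have "la (tau (ra u a)) v = la (tau u) (la a v)" by (simp add: tau_ra) (metis la_inf inf_commute)
  ultimately show "(ra u a, v) \<in> Emb x y \<longleftrightarrow> (u, la a v) \<in> Emb x y" by (simp add: Emb_def)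
qed

lemma Emb_least:
  assumes I: "idl I" and xy: "(x, y) \<in> I" and uv: "(u, v) \<in> Emb x y"
  shows "(u, v) \<in> I"
proof -
  define u' where "u' = ra u (supp v)"
  have u'x: "u' \<le> x" using uv by (simp add: Emb_def u'_def)
  have tu': "tau u' = inf (supp v) (tau u)" by (simp add: u'_def tau_ra)
  have "la (tau u') v = la (supp v) (la (tau u) v)" by (simp add: tu' la_inf)
  also have "\<dots> \<le> la (tau u) v" by (rule la_le)
  also have "\<dots> \<le> y" using uv by (simp add: Emb_def)
  finally have "(u', la (tau u') v) \<in> I" using idl_down[OF I xy u'x] by blast
  hence "(ra u' (tau u'), v) \<in> I" using idl_sat[OF I] by blast
  hence "(ra u (supp v), v) \<in> I" by (simp add: ra_tau_self u'_def)
  hence "(u, la (supp v) v) \<in> I" using idl_sat[OF I] by blast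
  thus ?thesis by (simp add: supp_self)
qed

lemma tensA_Emb: "tensA la ra x y = Emb x y"
proof
  show "tensA la ra x y \<subseteq> Emb x y"
    by (rule tensA_least[OF Emb_idl]) (simp add: Emb_def ra_le la_le)
  show "Emb x y \<subseteq> tensA la ra x y"
    using Emb_least[OF tensA_idl tensA_mem] by auto
qed

lemma pi1_eq: "pi1 la ra x = {(u, v). ra u (supp v) \<le> x}"
  unfolding pi1_def tensA_Emb Emb_def by simp
lemma pi2_eq: "pi2 la ra y = {(u, v). la (tau u) v \<le> y}"
  unfolding pi2_def tensA_Emb Emb_def by simp
lemma tensA_pi: "tensA la ra x y = pi1 la ra x \<inter> pi2 la ra y"
  unfolding pi1_eq pi2_eq tensA_Emb Emb_def by auto
lemma pi1_G2: "pi1 la ra x \<in> G2 la ra" unfolding pi1_def G2_iff by (rule tensA_idl)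
lemma pi2_G2: "pi2 la ra x \<in> G2 la ra" unfolding pi2_def G2_iff by (rule tensA_idl)

definition RR where "RR a = {(x, y). mult x y \<le> a}"

lemma RR_idl: "idl (RR a)"
proof (rule idlI)
  fix x y x' y' assume "(x, y) \<in> RR a" "x' \<le> x" "y' \<le> y"
  thus "(x', y') \<in> RR a" unfolding RR_def by (auto intro: order_trans[OF mult_mono])
next
  fix X y assume "\<And>x. x \<in> X \<Longrightarrow> (x, y) \<in> RR a"
  thus "(Sup X, y) \<in> RR a" unfolding RR_def by (auto simp: mult_SupL intro!: SUP_least)
next
  fix x Y assume "\<And>y. y \<in> Y \<Longrightarrow> (x, y) \<in> RR a"
  thus "(x, Sup Y) \<in> RR a" unfolding RR_def by (auto simp: mult_SupR intro!: SUP_least)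
next
  fix x b y show "(ra x b, y) \<in> RR a \<longleftrightarrow> (x, la b y) \<in> RR a" unfolding RR_def by (simp add: mult_ra)
qed

lemma mS_RR: "mS la ra mult a = RR a"
proof
  show "mS la ra mult a \<subseteq> RR a" unfolding mS_def
  proof (rule cjoin_G2_least[OF RR_idl])
    fix s assume "s \<in> {tensA la ra x y | x y. mult x y \<le> a}"
    then obtain x y where "s = tensA la ra x y" "mult x y \<le> a" by blast
    thus "s \<subseteq> RR a" using tensA_least[OF RR_idl, of x y a] by (simp add: RR_def)
  qed
  show "RR a \<subseteq> mS la ra mult a"
  proof
    fix p assume "p \<in> RR a"
    then obtain x y where p: "p = (x, y)" "mult x y \<le> a" by (auto simp: RR_def)
    hence "tensA la ra x y \<in> {tensA la ra x y | x y. mult x y \<le> a}" by blast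
    hence "tensA la ra x y \<subseteq> mS la ra mult a" unfolding mS_def by (rule cjoin_upper)
    thus "p \<in> mS la ra mult a" using tensA_mem p by blast
  qed
qed

lemma RR_Sup: "RR (Sup S) = cjoin (G2 la ra) (RR ` S)"
proof -
  from hM[unfolded multiplicative_def] obtain \<rho> where rho: "(\<forall>a. \<rho> a \<in> G2 la ra) \<and>
          (\<forall>I\<in>G2 la ra. \<forall>a. muA mult I \<le> a \<longleftrightarrow> I \<subseteq> \<rho> a) \<and>
          (\<forall>S. \<rho> (Sup S) = cjoin (G2 la ra) (\<rho> ` S))" ..
  have r1: "\<And>a. \<rho> a \<in> G2 la ra" using rho by simp
  have r2: "\<And>I a. I \<in> G2 la ra \<Longrightarrow> muA mult I \<le> a \<longleftrightarrow> I \<subseteq> \<rho> a" using rho by simp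
  have r3: "\<And>S. \<rho> (Sup S) = cjoin (G2 la ra) (\<rho> ` S)" using rho by simp
  have rr: "\<rho> a = RR a" for a
  proof (rule set_eqI)
    fix p :: "'q \<times> 'q"
    obtain x y where p: "p = (x, y)" by fastforce
    have i: "idl (\<rho> a)" using r1 G2_iff by blast
    have "(x, y) \<in> \<rho> a \<longleftrightarrow> tensA la ra x y \<subseteq> \<rho> a"
      using tensA_least[OF i] tensA_mem by blast
    also have "\<dots> \<longleftrightarrow> muA mult (tensA la ra x y) \<le> a"
      using r2[of "tensA la ra x y" a] tensA_idl[of x y] unfolding G2_iff by simp
    also have "\<dots> \<longleftrightarrow> mult x y \<le> a"
    proof
      assume "muA mult (tensA la ra x y) \<le> a"
      moreover have "mult x y \<le> muA mult (tensA la ra x y)" unfolding muA_def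
        using tensA_mem[of x y] by (intro Sup_upper) blast
      ultimately show "mult x y \<le> a" by simp
    next
      assume "mult x y \<le> a"
      hence "tensA la ra x y \<subseteq> RR a" by (intro tensA_least[OF RR_idl]) (simp add: RR_def)
      thus "muA mult (tensA la ra x y) \<le> a" unfolding muA_def RR_def by (auto intro!: Sup_least)
    qed
    finally show "p \<in> \<rho> a \<longleftrightarrow> p \<in> RR a" by (simp add: RR_def p)
  qed
  have "\<rho> = RR" using rr by blast
  thus ?thesis using r3[of S] by simp
qed

end



context BQF begin

lemma RR_eq: "mS la ra mult = RR" using mS_RR by blast

lemma frame_homI:
  assumes "\<And>x. x \<in> C \<Longrightarrow> h x \<in> D" "h top = top"
    "\<And>x y. x \<in> C \<Longrightarrow> y \<in> C \<Longrightarrow> h (inf x y) = inf (h x) (h y)"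
    "\<And>S. S \<subseteq> C \<Longrightarrow> h (cjoin C S) = cjoin D (h ` S)"
  shows "frame_hom C D h"
  unfolding frame_hom_def using assms by blast

lemma frame_hom_inf: "frame_hom C D h \<Longrightarrow> x \<in> C \<Longrightarrow> y \<in> C \<Longrightarrow> h (inf x y) = inf (h x) (h y)"
  unfolding frame_hom_def by blast
lemma frame_hom_cjoin: "frame_hom C D h \<Longrightarrow> S \<subseteq> C \<Longrightarrow> h (cjoin C S) = cjoin D (h ` S)"
  unfolding frame_hom_def by blast

lemma G2_decomp: "I \<in> G2 la ra \<Longrightarrow> I = cjoin (G2 la ra) {tensA la ra x y | x y. (x, y) \<in> I}"
proof
  assume I: "I \<in> G2 la ra"
  hence i: "idl I" by (simp add: G2_iff)
  show "cjoin (G2 la ra) {tensA la ra x y | x y. (x, y) \<in> I} \<subseteq> I"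
    by (rule cjoin_G2_least[OF i]) (use tensA_least[OF i] in blast)
  show "I \<subseteq> cjoin (G2 la ra) {tensA la ra x y | x y. (x, y) \<in> I}"
  proof
    fix p assume "p \<in> I"
    then obtain x y where p: "p = (x, y)" "(x, y) \<in> I" by (cases p) auto
    hence "tensA la ra x y \<subseteq> cjoin (G2 la ra) {tensA la ra x y | x y. (x, y) \<in> I}"
      by (intro cjoin_upper) blast
    thus "p \<in> cjoin (G2 la ra) {tensA la ra x y | x y. (x, y) \<in> I}" using tensA_mem p by blast
  qed
qed

lemma pair_formula:
  assumes h: "frame_hom (G2 la ra) Y h" and I: "I \<in> G2 la ra"
  shows "h I = cjoin Y {inf (h (pi1 la ra x)) (h (pi2 la ra y)) | x y. (x, y) \<in> I}"
proof -
  have sub: "{tensA la ra x y | x y. (x, y) \<in> I} \<subseteq> G2 la ra" using tensA_idl G2_iff by blast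
  have "h I = h (cjoin (G2 la ra) {tensA la ra x y | x y. (x, y) \<in> I})" using G2_decomp[OF I] by simp
  also have "\<dots> = cjoin Y (h ` {tensA la ra x y | x y. (x, y) \<in> I})" by (rule frame_hom_cjoin[OF h sub])
  also have "h ` {tensA la ra x y | x y. (x, y) \<in> I} = {inf (h (pi1 la ra x)) (h (pi2 la ra y)) | x y. (x, y) \<in> I}"
    unfolding img_Collect2 tensA_pi using frame_hom_inf[OF h pi1_G2 pi2_G2] by simp
  finally show ?thesis .
qed

lemma pair_unique:
  assumes "frame_hom (G2 la ra) Y h" "frame_hom (G2 la ra) Y h'"
    "\<And>x. h (pi1 la ra x) = h' (pi1 la ra x)" "\<And>y. h (pi2 la ra y) = h' (pi2 la ra y)"
    "I \<in> G2 la ra"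
  shows "h I = h' I"
  using pair_formula[OF assms(1,5)] pair_formula[OF assms(2,5)] assms(3,4) by simp

lemma G2_mono_Sup: fixes f :: "'q \<Rightarrow> 'q \<Rightarrow> 'b::complete_lattice" shows "I \<subseteq> J \<Longrightarrow> Sup {f x y | x y. (x, y) \<in> I} \<le> Sup {f x y | x y. (x, y) \<in> J}"
  by (rule Sup_subset_mono) blast

lemma inf_Sup_Sup: "inf (Sup A) (Sup B) = Sup {inf a b | a b. a \<in> A \<and> b \<in> B}" for A B :: "'q set"
proof -
  have "inf (Sup A) (Sup B) = (SUP a\<in>A. inf (Sup B) a)" by (subst inf_commute) (rule frameQ)
  also have "\<dots> = (SUP a\<in>A. inf a (Sup B))" by (simp only: inf_commute)
  also have "\<dots> = (SUP a\<in>A. SUP b\<in>B. inf a b)" by (simp only: frameQ)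
  also have "\<dots> = Sup {inf a b | a b. a \<in> A \<and> b \<in> B}"
    by (rule antisym) (auto intro!: SUP_least Sup_least intro: Sup_upper SUP_upper2)
  finally show ?thesis .
qed

lemma la_inf_inf: "inf (la a y) (la b y') = la (inf a b) (inf y y')"
  by (metis la_eq la_inf inf_assoc inf_commute inf_left_commute)
lemma ra_inf_inf: "inf (ra y a) (ra y' b) = ra (inf y y') (inf a b)"
  by (metis ra_eq ra_inf inf_assoc inf_commute inf_left_commute)

lemma ups_top[simp]: "ups top = top" using ups_hom unfolding frame_hom_def by blast
lemma ups_le_supp: "ups v \<le> supp v"
  by (metis supp_adj order_refl ups_la ups_mono)
lemma ups_le_tau: "ups u \<le> tau u"
  by (metis tau_adj order_refl ups_ra ups_mono)

definition h0 where "h0 I = Sup {la (ups x) y | x y. (x, y) \<in> I}"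
definition h0' where "h0' I = Sup {ra x (ups y) | x y. (x, y) \<in> I}"

lemma h0_hom: "frame_hom (G2 la ra) UNIV h0"
proof (rule frame_homI)
  show "h0 top = top" unfolding h0_def top_set_def
    by (rule top_le) (rule Sup_upper[of top], auto intro!: exI[of _ top])
next
  fix I J assume I: "I \<in> G2 la ra" and J: "J \<in> G2 la ra"
  show "h0 (inf I J) = inf (h0 I) (h0 J)"
  proof (rule antisym)
    show "h0 (inf I J) \<le> inf (h0 I) (h0 J)" unfolding h0_def by (intro le_infI G2_mono_Sup) auto
    show "inf (h0 I) (h0 J) \<le> h0 (inf I J)" unfolding h0_def inf_Sup_Sup
    proof (rule Sup_least, clarify)
      fix x y x' y' assume "(x, y) \<in> I" "(x', y') \<in> J"
      hence "(inf x x', inf y y') \<in> inf I J"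
        using idl_down I J G2_iff by (metis IntI inf.cobounded1 inf.cobounded2 inf_set_def)
      moreover have "inf (la (ups x) y) (la (ups x') y') = la (ups (inf x x')) (inf y y')"
        by (simp add: la_inf_inf ups_inf)
      ultimately show "inf (la (ups x) y) (la (ups x') y') \<le> Sup {la (ups x) y |x y. (x, y) \<in> inf I J}"
        by (intro Sup_upper) auto
    qed
  qed
next
  fix S assume S: "S \<subseteq> G2 la ra"
  show "h0 (cjoin (G2 la ra) S) = cjoin UNIV (h0 ` S)" unfolding cjoin_UNIV
  proof (rule antisym)
    show "Sup (h0 ` S) \<le> h0 (cjoin (G2 la ra) S)" unfolding h0_def
      by (rule SUP_least) (rule G2_mono_Sup, erule cjoin_upper)
    define T where "T = Sup (h0 ` S)"
    define J where "J = {(x, y). la (ups x) y \<le> T}"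
    have "idl J"
    proof (rule idlI)
      fix x y x' y' assume "(x, y) \<in> J" "x' \<le> x" "y' \<le> y"
      thus "(x', y') \<in> J" unfolding J_def by (auto intro: order_trans[OF la_mono[OF ups_mono]])
    next
      fix X y assume "\<And>x. x \<in> X \<Longrightarrow> (x, y) \<in> J"
      thus "(Sup X, y) \<in> J" unfolding J_def by (auto simp: ups_Sup la_SupL image_image intro!: SUP_least)
    next
      fix x Y assume "\<And>y. y \<in> Y \<Longrightarrow> (x, y) \<in> J"
      thus "(x, Sup Y) \<in> J" unfolding J_def by (auto simp: la_SupR intro!: SUP_least)
    next
      fix x a y show "(ra x a, y) \<in> J \<longleftrightarrow> (x, la a y) \<in> J"
        unfolding J_def by (simp add: ups_ra_gen la_inf)
    qed
    moreover have "s \<subseteq> J" if "s \<in> S" for s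
    proof
      fix p assume "p \<in> s"
      then obtain x y where p: "p = (x, y)" "(x, y) \<in> s" by (cases p) auto
      have "la (ups x) y \<le> h0 s" unfolding h0_def using p by (intro Sup_upper) blast
      also have "h0 s \<le> T" unfolding T_def using that by (rule SUP_upper)
      finally show "p \<in> J" using p by (simp add: J_def)
    qed
    ultimately have "cjoin (G2 la ra) S \<subseteq> J" by (intro cjoin_G2_least) auto
    thus "h0 (cjoin (G2 la ra) S) \<le> Sup (h0 ` S)" unfolding h0_def T_def[symmetric]
      by (intro Sup_least) (auto simp: J_def)
  qed
qed simp

lemma h0_pi1: "h0 (pi1 la ra x) = la (ups x) top"
proof (rule antisym)
  show "h0 (pi1 la ra x) \<le> la (ups x) top" unfolding h0_def pi1_eq
  proof (rule Sup_least, clarify)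
    fix u v assume "ra u (supp v) \<le> x"
    have "la (ups u) v = la (ups u) (la (supp v) v)" by (simp add: supp_self)
    also have "\<dots> = la (ups (ra u (supp v))) v" by (simp add: la_inf[symmetric] ups_ra_gen)
    also have "\<dots> \<le> la (ups x) top" by (intro la_mono ups_mono) (auto simp: \<open>ra u (supp v) \<le> x\<close>)
    finally show "la (ups u) v \<le> la (ups x) top" .
  qed
  have "la (ups x) top \<in> {la (ups xa) y |xa y. (xa, y) \<in> {(u, v). ra u (supp v) \<le> x}}"
    by (intro CollectI exI[of _ x] exI[of _ top]) simp
  thus "la (ups x) top \<le> h0 (pi1 la ra x)" unfolding h0_def pi1_eq
    by (intro Sup_upper)
qed

lemma h0_pi2: "h0 (pi2 la ra y) = y"
proof (rule antisym)
  show "h0 (pi2 la ra y) \<le> y" unfolding h0_def pi2_eq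
  proof (rule Sup_least, clarify)
    fix u v assume "la (tau u) v \<le> y"
    moreover have "la (ups u) v \<le> la (tau u) v" by (intro la_mono ups_le_tau) simp
    ultimately show "la (ups u) v \<le> y" by simp
  qed
  have "la (ups top) y \<in> {la (ups x) ya |x ya. (x, ya) \<in> {(u, v). la (tau u) v \<le> y}}"
    using la_le by blast
  thus "y \<le> h0 (pi2 la ra y)" unfolding h0_def pi2_eq by (auto intro: Sup_upper)
qed

lemma h0'_hom: "frame_hom (G2 la ra) UNIV h0'"
proof (rule frame_homI)
  show "h0' top = top" unfolding h0'_def top_set_def
    by (rule top_le) (rule Sup_upper[of top], auto intro!: exI[of _ top])
next
  fix I J assume I: "I \<in> G2 la ra" and J: "J \<in> G2 la ra"
  show "h0' (inf I J) = inf (h0' I) (h0' J)"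
  proof (rule antisym)
    show "h0' (inf I J) \<le> inf (h0' I) (h0' J)" unfolding h0'_def by (intro le_infI G2_mono_Sup) auto
    show "inf (h0' I) (h0' J) \<le> h0' (inf I J)" unfolding h0'_def inf_Sup_Sup
    proof (rule Sup_least, clarify)
      fix x y x' y' assume "(x, y) \<in> I" "(x', y') \<in> J"
      hence "(inf x x', inf y y') \<in> inf I J"
        using idl_down I J G2_iff by (metis IntI inf.cobounded1 inf.cobounded2 inf_set_def)
      moreover have "inf (ra x (ups y)) (ra x' (ups y')) = ra (inf x x') (ups (inf y y'))"
        by (simp add: ra_inf_inf ups_inf)
      ultimately show "inf (ra x (ups y)) (ra x' (ups y')) \<le> Sup {ra x (ups y) |x y. (x, y) \<in> inf I J}"
        by (intro Sup_upper) auto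
    qed
  qed
next
  fix S assume S: "S \<subseteq> G2 la ra"
  show "h0' (cjoin (G2 la ra) S) = cjoin UNIV (h0' ` S)" unfolding cjoin_UNIV
  proof (rule antisym)
    show "Sup (h0' ` S) \<le> h0' (cjoin (G2 la ra) S)" unfolding h0'_def
      by (rule SUP_least) (rule G2_mono_Sup, erule cjoin_upper)
    define T where "T = Sup (h0' ` S)"
    define J where "J = {(x, y). ra x (ups y) \<le> T}"
    have "idl J"
    proof (rule idlI)
      fix x y x' y' assume "(x, y) \<in> J" "x' \<le> x" "y' \<le> y"
      thus "(x', y') \<in> J" unfolding J_def by (auto intro: order_trans[OF ra_mono[OF _ ups_mono]])
    next
      fix X y assume "\<And>x. x \<in> X \<Longrightarrow> (x, y) \<in> J"
      thus "(Sup X, y) \<in> J" unfolding J_def by (auto simp: ra_SupL intro!: SUP_least)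
    next
      fix x Y assume "\<And>y. y \<in> Y \<Longrightarrow> (x, y) \<in> J"
      thus "(x, Sup Y) \<in> J" unfolding J_def by (auto simp: ups_Sup ra_SupR image_image intro!: SUP_least)
    next
      fix x a y show "(ra x a, y) \<in> J \<longleftrightarrow> (x, la a y) \<in> J"
        unfolding J_def by (simp add: ups_la_gen ra_inf)
    qed
    moreover have "s \<subseteq> J" if "s \<in> S" for s
    proof
      fix p assume "p \<in> s"
      then obtain x y where p: "p = (x, y)" "(x, y) \<in> s" by (cases p) auto
      have "ra x (ups y) \<le> h0' s" unfolding h0'_def using p by (intro Sup_upper) blast
      also have "h0' s \<le> T" unfolding T_def using that by (rule SUP_upper)
      finally show "p \<in> J" using p by (simp add: J_def)
    qed
    ultimately have "cjoin (G2 la ra) S \<subseteq> J" by (intro cjoin_G2_least) auto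
    thus "h0' (cjoin (G2 la ra) S) \<le> Sup (h0' ` S)" unfolding h0'_def T_def[symmetric]
      by (intro Sup_least) (auto simp: J_def)
  qed
qed simp

lemma h0'_pi1: "h0' (pi1 la ra x) = x"
proof (rule antisym)
  show "h0' (pi1 la ra x) \<le> x" unfolding h0'_def pi1_eq
  proof (rule Sup_least, clarify)
    fix u v assume "ra u (supp v) \<le> x"
    moreover have "ra u (ups v) \<le> ra u (supp v)" by (intro ra_mono ups_le_supp) simp
    ultimately show "ra u (ups v) \<le> x" by simp
  qed
  have "ra x (ups top) \<in> {ra xa (ups y) |xa y. (xa, y) \<in> {(u, v). ra u (supp v) \<le> x}}"
    using ra_le by fastforce
  thus "x \<le> h0' (pi1 la ra x)" unfolding h0'_def pi1_eq by (auto intro: Sup_upper)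
qed

lemma h0'_pi2: "h0' (pi2 la ra y) = ra top (ups y)"
proof (rule antisym)
  show "h0' (pi2 la ra y) \<le> ra top (ups y)" unfolding h0'_def pi2_eq
  proof (rule Sup_least, clarify)
    fix u v assume a: "la (tau u) v \<le> y"
    have "ra u (ups v) = ra (ra u (tau u)) (ups v)" by (simp add: ra_tau_self)
    also have "\<dots> = ra u (ups (la (tau u) v))" by (simp add: ra_inf[symmetric] ups_la_gen)
    also have "\<dots> \<le> ra top (ups y)" by (intro ra_mono ups_mono) (auto simp: a)
    finally show "ra u (ups v) \<le> ra top (ups y)" .
  qed
  show "ra top (ups y) \<le> h0' (pi2 la ra y)" unfolding h0'_def pi2_eq
    by (intro Sup_upper) (auto intro: la_le)
qed

end



context BQF begin

abbreviation "idl3 \<equiv> tens3_ideal la ra"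

lemma i3_down: "idl3 J \<Longrightarrow> (x, y, z) \<in> J \<Longrightarrow> x' \<le> x \<Longrightarrow> y' \<le> y \<Longrightarrow> z' \<le> z \<Longrightarrow> (x', y', z') \<in> J"
  unfolding tens3_ideal_def by (drule conjunct1) blast
lemma i3_sup1: "idl3 J \<Longrightarrow> (\<And>x. x\<in>X \<Longrightarrow> (x, y, z) \<in> J) \<Longrightarrow> (Sup X, y, z) \<in> J"
  unfolding tens3_ideal_def by (drule conjunct2, drule conjunct1) blast
lemma i3_sup2: "idl3 J \<Longrightarrow> (\<And>y. y\<in>Y \<Longrightarrow> (x, y, z) \<in> J) \<Longrightarrow> (x, Sup Y, z) \<in> J"
  unfolding tens3_ideal_def by (drule conjunct2, drule conjunct2, drule conjunct1) blast
lemma i3_sup3: "idl3 J \<Longrightarrow> (\<And>z. z\<in>Z \<Longrightarrow> (x, y, z) \<in> J) \<Longrightarrow> (x, y, Sup Z) \<in> J"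
  unfolding tens3_ideal_def by (drule conjunct2, drule conjunct2, drule conjunct2, drule conjunct1) blast
lemma i3_sat1: "idl3 J \<Longrightarrow> (ra x a, y, z) \<in> J \<longleftrightarrow> (x, la a y, z) \<in> J"
  unfolding tens3_ideal_def by (drule conjunct2, drule conjunct2, drule conjunct2, drule conjunct2, drule conjunct1) blast
lemma i3_sat2: "idl3 J \<Longrightarrow> (x, ra y a, z) \<in> J \<longleftrightarrow> (x, y, la a z) \<in> J"
  unfolding tens3_ideal_def by (drule conjunct2, drule conjunct2, drule conjunct2, drule conjunct2, drule conjunct2) blast
lemma idl3I:
  assumes "\<And>x y z x' y' z'. (x, y, z) \<in> J \<Longrightarrow> x' \<le> x \<Longrightarrow> y' \<le> y \<Longrightarrow> z' \<le> z \<Longrightarrow> (x', y', z') \<in> J"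
    and "\<And>X y z. (\<And>x. x\<in>X \<Longrightarrow> (x, y, z) \<in> J) \<Longrightarrow> (Sup X, y, z) \<in> J"
    and "\<And>x Y z. (\<And>y. y\<in>Y \<Longrightarrow> (x, y, z) \<in> J) \<Longrightarrow> (x, Sup Y, z) \<in> J"
    and "\<And>x y Z. (\<And>z. z\<in>Z \<Longrightarrow> (x, y, z) \<in> J) \<Longrightarrow> (x, y, Sup Z) \<in> J"
    and "\<And>x a y z. (ra x a, y, z) \<in> J \<longleftrightarrow> (x, la a y, z) \<in> J"
    and "\<And>x a y z. (x, ra y a, z) \<in> J \<longleftrightarrow> (x, y, la a z) \<in> J"
  shows "idl3 J"
  unfolding tens3_ideal_def using assms by (intro conjI allI impI) simp_all

lemma idl3_Inter: assumes F: "\<And>I. I \<in> F \<Longrightarrow> idl3 I" shows "idl3 (\<Inter>F)"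
proof (rule idl3I)
  fix x y z x' y' z' assume h: "(x, y, z) \<in> \<Inter>F" "x' \<le> x" "y' \<le> y" "z' \<le> z"
  show "(x', y', z') \<in> \<Inter>F"
  proof (rule InterI)
    fix I assume "I \<in> F" thus "(x', y', z') \<in> I" using i3_down[OF F[OF \<open>I \<in> F\<close>] _ h(2,3,4)] h(1) by blast
  qed
next
  fix X y z assume h: "\<And>x. x \<in> X \<Longrightarrow> (x, y, z) \<in> \<Inter>F"
  show "(Sup X, y, z) \<in> \<Inter>F"
  proof (rule InterI)
    fix I assume "I \<in> F" thus "(Sup X, y, z) \<in> I" using i3_sup1[OF F[OF \<open>I \<in> F\<close>]] h by blast
  qed
next
  fix x Y z assume h: "\<And>y. y \<in> Y \<Longrightarrow> (x, y, z) \<in> \<Inter>F"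
  show "(x, Sup Y, z) \<in> \<Inter>F"
  proof (rule InterI)
    fix I assume "I \<in> F" thus "(x, Sup Y, z) \<in> I" using i3_sup2[OF F[OF \<open>I \<in> F\<close>]] h by blast
  qed
next
  fix x y Z assume h: "\<And>z. z \<in> Z \<Longrightarrow> (x, y, z) \<in> \<Inter>F"
  show "(x, y, Sup Z) \<in> \<Inter>F"
  proof (rule InterI)
    fix I assume "I \<in> F" thus "(x, y, Sup Z) \<in> I" using i3_sup3[OF F[OF \<open>I \<in> F\<close>]] h by blast
  qed
next
  fix x a y z show "(ra x a, y, z) \<in> \<Inter>F \<longleftrightarrow> (x, la a y, z) \<in> \<Inter>F"
    using i3_sat1[OF F] by blast
next
  fix x a y z show "(x, ra y a, z) \<in> \<Inter>F \<longleftrightarrow> (x, y, la a z) \<in> \<Inter>F"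
    using i3_sat2[OF F] by blast
qed

lemma G3_iff: "J \<in> G3 la ra \<longleftrightarrow> idl3 J" unfolding G3_def by simp

lemma idl3_cjoin: "idl3 (cjoin (G3 la ra) S)"
  unfolding cjoin_eq by (rule idl3_Inter) (auto simp: G3_iff)

lemma cjoin_G3_least: "idl3 c \<Longrightarrow> (\<And>s. s\<in>S \<Longrightarrow> s \<subseteq> c) \<Longrightarrow> cjoin (G3 la ra) S \<subseteq> c"
  by (rule cjoin_least) (auto simp: G3_iff)

lemma p12_char:
  assumes "idl3 E" "{(x, y, z). (x, y) \<in> I} \<subseteq> E"
    "\<And>J. idl3 J \<Longrightarrow> {(x, y, z). (x, y) \<in> I} \<subseteq> J \<Longrightarrow> E \<subseteq> J"
  shows "p12 la ra I = E"
  unfolding p12_def using assms by blast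

lemma p23_char:
  assumes "idl3 E" "{(x, y, z). (y, z) \<in> I} \<subseteq> E"
    "\<And>J. idl3 J \<Longrightarrow> {(x, y, z). (y, z) \<in> I} \<subseteq> J \<Longrightarrow> E \<subseteq> J"
  shows "p23 la ra I = E"
  unfolding p23_def using assms by blast

definition H1 where "H1 I = {(u, v, w). (mult u v, w) \<in> I}"
definition H2 where "H2 I = {(u, v, w). (u, mult v w) \<in> I}"

lemma H1_idl3: assumes I: "idl I" shows "idl3 (H1 I)"
proof (rule idl3I)
  fix x y z x' y' z' assume "(x, y, z) \<in> H1 I" "x' \<le> x" "y' \<le> y" "z' \<le> z"
  thus "(x', y', z') \<in> H1 I" unfolding H1_def using idl_down[OF I] mult_mono by blast
next
  fix X y z assume h: "\<And>x. x \<in> X \<Longrightarrow> (x, y, z) \<in> H1 I"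
  have "(Sup ((\<lambda>x. mult x y) ` X), z) \<in> I" by (rule idl_supL[OF I]) (use h in \<open>auto simp: H1_def\<close>)
  thus "(Sup X, y, z) \<in> H1 I" by (simp add: H1_def mult_SupL)
next
  fix x Y z assume h: "\<And>y. y \<in> Y \<Longrightarrow> (x, y, z) \<in> H1 I"
  have "(Sup (mult x ` Y), z) \<in> I" by (rule idl_supL[OF I]) (use h in \<open>auto simp: H1_def\<close>)
  thus "(x, Sup Y, z) \<in> H1 I" by (simp add: H1_def mult_SupR)
next
  fix x y Z assume "\<And>z. z \<in> Z \<Longrightarrow> (x, y, z) \<in> H1 I"
  thus "(x, y, Sup Z) \<in> H1 I" unfolding H1_def by (auto intro!: idl_supR[OF I])
next
  fix x a y z show "(ra x a, y, z) \<in> H1 I \<longleftrightarrow> (x, la a y, z) \<in> H1 I"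
    unfolding H1_def by (simp add: mult_ra)
next
  fix x a y z show "(x, ra y a, z) \<in> H1 I \<longleftrightarrow> (x, y, la a z) \<in> H1 I"
    unfolding H1_def by (simp add: ra_mult[symmetric] idl_sat[OF I])
qed

lemma H2_idl3: assumes I: "idl I" shows "idl3 (H2 I)"
proof (rule idl3I)
  fix x y z x' y' z' assume "(x, y, z) \<in> H2 I" "x' \<le> x" "y' \<le> y" "z' \<le> z"
  thus "(x', y', z') \<in> H2 I" unfolding H2_def using idl_down[OF I] mult_mono by blast
next
  fix X y z assume "\<And>x. x \<in> X \<Longrightarrow> (x, y, z) \<in> H2 I"
  thus "(Sup X, y, z) \<in> H2 I" unfolding H2_def by (auto intro!: idl_supL[OF I])
next
  fix x Y z assume h: "\<And>y. y \<in> Y \<Longrightarrow> (x, y, z) \<in> H2 I"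
  have "(x, Sup ((\<lambda>y. mult y z) ` Y)) \<in> I" by (rule idl_supR[OF I]) (use h in \<open>auto simp: H2_def\<close>)
  thus "(x, Sup Y, z) \<in> H2 I" by (simp add: H2_def mult_SupL)
next
  fix x y Z assume h: "\<And>z. z \<in> Z \<Longrightarrow> (x, y, z) \<in> H2 I"
  have "(x, Sup (mult y ` Z)) \<in> I" by (rule idl_supR[OF I]) (use h in \<open>auto simp: H2_def\<close>)
  thus "(x, y, Sup Z) \<in> H2 I" by (simp add: H2_def mult_SupR)
next
  fix x a y z show "(ra x a, y, z) \<in> H2 I \<longleftrightarrow> (x, la a y, z) \<in> H2 I"
    unfolding H2_def by (simp add: idl_sat[OF I] mult_la)
next
  fix x a y z show "(x, ra y a, z) \<in> H2 I \<longleftrightarrow> (x, y, la a z) \<in> H2 I"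
    unfolding H2_def by (simp add: mult_ra)
qed

lemma KL:
  assumes M: "idl M" and h: "\<And>u v. mult u v \<le> p \<Longrightarrow> (u, ra v a) \<in> M" and xy: "mult x y \<le> ra p a"
  shows "(x, y) \<in> M"
proof -
  define y' where "y' = la (tau x) y"
  have m: "mult x y' = mult x y" unfolding y'_def by (metis mult_ra ra_tau_self)
  have "mult x y \<le> ra top a" using xy ra_mono[of p top a a] by simp
  hence "tau (mult x y) \<le> a" by (simp add: tau_adj)
  hence "tau y' \<le> a" unfolding y'_def by (simp add: tau_mult)
  hence "ra y' a = y'" by (simp add: tau_adj ra_idem)
  moreover have "mult x y' \<le> p" using m xy ra_le order_trans by metis
  ultimately have "(x, y') \<in> M" using h by metis
  hence "(ra x (tau x), y) \<in> M" unfolding y'_def using idl_sat[OF M] by blast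
  thus ?thesis by (simp add: ra_tau_self)
qed

lemma KL':
  assumes M: "idl M" and h: "\<And>u v. mult u v \<le> p \<Longrightarrow> (la a u, v) \<in> M" and xy: "mult x y \<le> la a p"
  shows "(x, y) \<in> M"
proof -
  define x' where "x' = ra x (supp y)"
  have m: "mult x' y = mult x y" unfolding x'_def by (simp add: mult_ra supp_self)
  have "mult x y \<le> la a top" using xy la_mono[of a a p top] by simp
  hence "supp (mult x y) \<le> a" by (simp add: supp_adj)
  hence "supp x' \<le> a" unfolding x'_def by (simp add: supp_mult)
  hence "la a x' = x'" by (simp add: supp_adj la_idem)
  moreover have "mult x' y \<le> p" using m xy la_le order_trans by metis
  ultimately have "(x', y) \<in> M" using h by metis
  hence "(x, la (supp y) y) \<in> M" unfolding x'_def using idl_sat[OF M] by blast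
  thus ?thesis by (simp add: supp_self)
qed

lemma H1_hom: "frame_hom (G2 la ra) (G3 la ra) H1"
proof (rule frame_homI)
  fix I assume "I \<in> G2 la ra" thus "H1 I \<in> G3 la ra" by (simp add: G2_iff G3_iff H1_idl3)
next
  show "H1 top = top" unfolding H1_def by auto
next
  fix I J show "H1 (inf I J) = inf (H1 I) (H1 J)" unfolding H1_def by auto
next
  fix S assume S: "S \<subseteq> G2 la ra"
  define T where "T = cjoin (G3 la ra) (H1 ` S)"
  have T: "idl3 T" unfolding T_def by (rule idl3_cjoin)
  have sT: "H1 s \<subseteq> T" if "s \<in> S" for s unfolding T_def using that by (intro cjoin_upper) blast
  show "H1 (cjoin (G2 la ra) S) = cjoin (G3 la ra) (H1 ` S)" unfolding T_def[symmetric]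
  proof
    show "T \<subseteq> H1 (cjoin (G2 la ra) S)" unfolding T_def
    proof (rule cjoin_G3_least)
      show "idl3 (H1 (cjoin (G2 la ra) S))" by (rule H1_idl3[OF idl_cjoin])
      fix s assume "s \<in> H1 ` S"
      then obtain s' where "s' \<in> S" "s = H1 s'" by blast
      thus "s \<subseteq> H1 (cjoin (G2 la ra) S)" unfolding H1_def using cjoin_upper[of s' S] by blast
    qed
    define Mw where "Mw w = {(u, v). (u, v, w) \<in> T}" for w
    have Mw: "idl (Mw w)" for w
    proof (rule idlI)
      fix x y x' y' assume "(x, y) \<in> Mw w" "x' \<le> x" "y' \<le> y"
      hence "(x, y, w) \<in> T" "x' \<le> x" "y' \<le> y" by (auto simp: Mw_def)
      hence "(x', y', w) \<in> T" using i3_down[OF T] order_refl by metis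
      thus "(x', y') \<in> Mw w" by (simp add: Mw_def)
    next
      fix X y assume "\<And>x. x \<in> X \<Longrightarrow> (x, y) \<in> Mw w"
      hence "(Sup X, y, w) \<in> T" by (intro i3_sup1[OF T]) (auto simp: Mw_def)
      thus "(Sup X, y) \<in> Mw w" by (simp add: Mw_def)
    next
      fix x Y assume "\<And>y. y \<in> Y \<Longrightarrow> (x, y) \<in> Mw w"
      hence "(x, Sup Y, w) \<in> T" by (intro i3_sup2[OF T]) (auto simp: Mw_def)
      thus "(x, Sup Y) \<in> Mw w" by (simp add: Mw_def)
    next
      fix x a y show "(ra x a, y) \<in> Mw w \<longleftrightarrow> (x, la a y) \<in> Mw w"
        unfolding Mw_def using i3_sat1[OF T] by simp
    qed
    define J where "J = {(p, w). RR p \<subseteq> Mw w}"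
    have J: "idl J"
    proof (rule idlI)
      fix x y x' y' assume h: "(x, y) \<in> J" "x' \<le> x" "y' \<le> y"
      have "RR x' \<subseteq> Mw y'"
      proof (clarsimp simp: RR_def Mw_def)
        fix u v assume "mult u v \<le> x'"
        hence "mult u v \<le> x" using h(2) by simp
        hence "(u, v, y) \<in> T" using h(1) by (auto simp: J_def RR_def Mw_def)
        thus "(u, v, y') \<in> T" using i3_down[OF T _ order_refl order_refl h(3)] by blast
      qed
      thus "(x', y') \<in> J" by (simp add: J_def)
    next
      fix X y assume h: "\<And>x. x \<in> X \<Longrightarrow> (x, y) \<in> J"
      have "RR (Sup X) \<subseteq> Mw y" unfolding RR_Sup
        by (rule cjoin_G2_least[OF Mw]) (use h in \<open>auto simp: J_def\<close>)
      thus "(Sup X, y) \<in> J" by (simp add: J_def)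
    next
      fix x Y assume h: "\<And>y. y \<in> Y \<Longrightarrow> (x, y) \<in> J"
      have "RR x \<subseteq> Mw (Sup Y)"
      proof (clarsimp simp: RR_def Mw_def)
        fix u v assume "mult u v \<le> x"
        thus "(u, v, Sup Y) \<in> T" using h by (intro i3_sup3[OF T]) (auto simp: J_def RR_def Mw_def)
      qed
      thus "(x, Sup Y) \<in> J" by (simp add: J_def)
    next
      fix p a w show "(ra p a, w) \<in> J \<longleftrightarrow> (p, la a w) \<in> J"
      proof
        assume h: "(ra p a, w) \<in> J"
        show "(p, la a w) \<in> J" unfolding J_def
        proof (clarsimp simp: RR_def Mw_def)
          fix u v assume "mult u v \<le> p"
          hence "mult u (ra v a) \<le> ra p a" by (simp add: ra_mult[symmetric] ra_mono)
          hence "(u, ra v a, w) \<in> T" using h by (auto simp: J_def RR_def Mw_def)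
          thus "(u, v, la a w) \<in> T" using i3_sat2[OF T] by blast
        qed
      next
        assume h: "(p, la a w) \<in> J"
        show "(ra p a, w) \<in> J" unfolding J_def
        proof (clarsimp simp: RR_def)
          fix u v assume uv: "mult u v \<le> ra p a"
          show "(u, v) \<in> Mw w"
          proof (rule KL[OF Mw _ uv])
            fix u' v' assume "mult u' v' \<le> p"
            hence "(u', v', la a w) \<in> T" using h by (auto simp: J_def RR_def Mw_def)
            thus "(u', ra v' a) \<in> Mw w" using i3_sat2[OF T] by (simp add: Mw_def)
          qed
        qed
      qed
    qed
    have "s \<subseteq> J" if s: "s \<in> S" for s
    proof
      fix q assume "q \<in> s"
      then obtain p w where q: "q = (p, w)" "(p, w) \<in> s" by (cases q) auto
      have si: "idl s" using s S G2_iff by blast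
      have "RR p \<subseteq> Mw w"
      proof (clarsimp simp: RR_def Mw_def)
        fix u v assume "mult u v \<le> p"
        hence "(mult u v, w) \<in> s" using idl_down[OF si q(2)] by blast
        hence "(u, v, w) \<in> H1 s" by (simp add: H1_def)
        thus "(u, v, w) \<in> T" using sT[OF s] by blast
      qed
      thus "q \<in> J" by (simp add: J_def q)
    qed
    hence cJ: "cjoin (G2 la ra) S \<subseteq> J" by (intro cjoin_G2_least[OF J])
    show "H1 (cjoin (G2 la ra) S) \<subseteq> T"
    proof (clarsimp simp: H1_def)
      fix u v w assume "(mult u v, w) \<in> cjoin (G2 la ra) S"
      hence "RR (mult u v) \<subseteq> Mw w" using cJ by (auto simp: J_def)
      thus "(u, v, w) \<in> T" by (auto simp: RR_def Mw_def)
    qed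
  qed
qed

lemma H2_hom: "frame_hom (G2 la ra) (G3 la ra) H2"
proof (rule frame_homI)
  fix I assume "I \<in> G2 la ra" thus "H2 I \<in> G3 la ra" by (simp add: G2_iff G3_iff H2_idl3)
next
  show "H2 top = top" unfolding H2_def by auto
next
  fix I J show "H2 (inf I J) = inf (H2 I) (H2 J)" unfolding H2_def by auto
next
  fix S assume S: "S \<subseteq> G2 la ra"
  define T where "T = cjoin (G3 la ra) (H2 ` S)"
  have T: "idl3 T" unfolding T_def by (rule idl3_cjoin)
  have sT: "H2 s \<subseteq> T" if "s \<in> S" for s unfolding T_def using that by (intro cjoin_upper) blast
  show "H2 (cjoin (G2 la ra) S) = cjoin (G3 la ra) (H2 ` S)" unfolding T_def[symmetric]
  proof
    show "T \<subseteq> H2 (cjoin (G2 la ra) S)" unfolding T_def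
    proof (rule cjoin_G3_least)
      show "idl3 (H2 (cjoin (G2 la ra) S))" by (rule H2_idl3[OF idl_cjoin])
      fix s assume "s \<in> H2 ` S"
      then obtain s' where "s' \<in> S" "s = H2 s'" by blast
      thus "s \<subseteq> H2 (cjoin (G2 la ra) S)" unfolding H2_def using cjoin_upper[of s' S] by blast
    qed
    define Mu where "Mu u = {(v, w). (u, v, w) \<in> T}" for u
    have Mu: "idl (Mu u)" for u
    proof (rule idlI)
      fix x y x' y' assume "(x, y) \<in> Mu u" "x' \<le> x" "y' \<le> y"
      hence "(u, x, y) \<in> T" "x' \<le> x" "y' \<le> y" by (auto simp: Mu_def)
      hence "(u, x', y') \<in> T" using i3_down[OF T] order_refl by metis
      thus "(x', y') \<in> Mu u" by (simp add: Mu_def)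
    next
      fix X y assume "\<And>x. x \<in> X \<Longrightarrow> (x, y) \<in> Mu u"
      hence "(u, Sup X, y) \<in> T" by (intro i3_sup2[OF T]) (auto simp: Mu_def)
      thus "(Sup X, y) \<in> Mu u" by (simp add: Mu_def)
    next
      fix x Y assume "\<And>y. y \<in> Y \<Longrightarrow> (x, y) \<in> Mu u"
      hence "(u, x, Sup Y) \<in> T" by (intro i3_sup3[OF T]) (auto simp: Mu_def)
      thus "(x, Sup Y) \<in> Mu u" by (simp add: Mu_def)
    next
      fix x a y show "(ra x a, y) \<in> Mu u \<longleftrightarrow> (x, la a y) \<in> Mu u"
        unfolding Mu_def using i3_sat2[OF T] by simp
    qed
    define J where "J = {(u, q). RR q \<subseteq> Mu u}"
    have J: "idl J"
    proof (rule idlI)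
      fix x y x' y' assume h: "(x, y) \<in> J" "x' \<le> x" "y' \<le> y"
      have "RR y' \<subseteq> Mu x'"
      proof (clarsimp simp: RR_def Mu_def)
        fix v w assume "mult v w \<le> y'"
        hence "mult v w \<le> y" using h(3) by simp
        hence "(x, v, w) \<in> T" using h(1) by (auto simp: J_def RR_def Mu_def)
        thus "(x', v, w) \<in> T" using i3_down[OF T _ h(2) order_refl order_refl] by blast
      qed
      thus "(x', y') \<in> J" by (simp add: J_def)
    next
      fix X y assume h: "\<And>x. x \<in> X \<Longrightarrow> (x, y) \<in> J"
      have "RR y \<subseteq> Mu (Sup X)"
      proof (clarsimp simp: RR_def Mu_def)
        fix v w assume "mult v w \<le> y"
        thus "(Sup X, v, w) \<in> T" using h by (intro i3_sup1[OF T]) (auto simp: J_def RR_def Mu_def)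
      qed
      thus "(Sup X, y) \<in> J" by (simp add: J_def)
    next
      fix x Y assume h: "\<And>y. y \<in> Y \<Longrightarrow> (x, y) \<in> J"
      have "RR (Sup Y) \<subseteq> Mu x" unfolding RR_Sup
        by (rule cjoin_G2_least[OF Mu]) (use h in \<open>auto simp: J_def\<close>)
      thus "(x, Sup Y) \<in> J" by (simp add: J_def)
    next
      fix u a q show "(ra u a, q) \<in> J \<longleftrightarrow> (u, la a q) \<in> J"
      proof
        assume h: "(ra u a, q) \<in> J"
        show "(u, la a q) \<in> J" unfolding J_def
        proof (clarsimp simp: RR_def)
          fix v w assume vw: "mult v w \<le> la a q"
          show "(v, w) \<in> Mu u"
          proof (rule KL'[OF Mu _ vw])
            fix v' w' assume "mult v' w' \<le> q"
            hence "(ra u a, v', w') \<in> T" using h by (auto simp: J_def RR_def Mu_def)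
            thus "(la a v', w') \<in> Mu u" using i3_sat1[OF T] by (simp add: Mu_def)
          qed
        qed
      next
        assume h: "(u, la a q) \<in> J"
        show "(ra u a, q) \<in> J" unfolding J_def
        proof (clarsimp simp: RR_def Mu_def)
          fix v w assume "mult v w \<le> q"
          hence "mult (la a v) w \<le> la a q" by (simp add: mult_la la_mono)
          hence "(u, la a v, w) \<in> T" using h by (auto simp: J_def RR_def Mu_def)
          thus "(ra u a, v, w) \<in> T" using i3_sat1[OF T] by blast
        qed
      qed
    qed
    have "s \<subseteq> J" if s: "s \<in> S" for s
    proof
      fix p assume "p \<in> s"
      then obtain u q where p: "p = (u, q)" "(u, q) \<in> s" by (cases p) auto
      have si: "idl s" using s S G2_iff by blast
      have "RR q \<subseteq> Mu u"
      proof (clarsimp simp: RR_def Mu_def)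
        fix v w assume "mult v w \<le> q"
        hence "(u, mult v w) \<in> s" using idl_down[OF si p(2)] by blast
        hence "(u, v, w) \<in> H2 s" by (simp add: H2_def)
        thus "(u, v, w) \<in> T" using sT[OF s] by blast
      qed
      thus "p \<in> J" by (simp add: J_def p)
    qed
    hence cJ: "cjoin (G2 la ra) S \<subseteq> J" by (intro cjoin_G2_least[OF J])
    show "H2 (cjoin (G2 la ra) S) \<subseteq> T"
    proof (clarsimp simp: H2_def)
      fix u v w assume "(u, mult v w) \<in> cjoin (G2 la ra) S"
      hence "RR (mult v w) \<subseteq> Mu u" using cJ by (auto simp: J_def)
      thus "(u, v, w) \<in> T" by (auto simp: RR_def Mu_def)
    qed
  qed
qed

lemma pi1_idl: "idl (pi1 la ra x)" using pi1_G2 G2_iff by blast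
lemma pi2_idl: "idl (pi2 la ra x)" using pi2_G2 G2_iff by blast

lemma H1_pi1: "H1 (pi1 la ra x) = p12 la ra (RR x)"
proof (rule sym, rule p12_char)
  show "idl3 (H1 (pi1 la ra x))" by (rule H1_idl3[OF pi1_idl])
  show "{(u, v, w). (u, v) \<in> RR x} \<subseteq> H1 (pi1 la ra x)"
  proof (clarsimp simp: H1_def pi1_eq RR_def)
    fix u v w assume "mult u v \<le> x"
    thus "ra (mult u v) (supp w) \<le> x" using ra_le[of "mult u v" "supp w"] by simp
  qed
  fix J assume J: "idl3 J" and sub: "{(u, v, w). (u, v) \<in> RR x} \<subseteq> J"
  show "H1 (pi1 la ra x) \<subseteq> J"
  proof (clarsimp simp: H1_def pi1_eq)
    fix u v w assume "ra (mult u v) (supp w) \<le> x"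
    hence "(u, ra v (supp w), w) \<in> J" using sub by (auto simp: RR_def ra_mult)
    hence "(u, v, la (supp w) w) \<in> J" using i3_sat2[OF J] by blast
    thus "(u, v, w) \<in> J" by (simp add: supp_self)
  qed
qed

lemma H1_pi2: "H1 (pi2 la ra y) = p23 la ra (pi2 la ra y)"
proof (rule sym, rule p23_char)
  show "idl3 (H1 (pi2 la ra y))" by (rule H1_idl3[OF pi2_idl])
  show "{(u, v, w). (v, w) \<in> pi2 la ra y} \<subseteq> H1 (pi2 la ra y)"
  proof (clarsimp simp: H1_def pi2_eq)
    fix u v w assume "la (tau v) w \<le> y"
    thus "la (tau (mult u v)) w \<le> y" using la_mono[OF tau_mult_le[of u v] order_refl[of w]] by simp
  qed
  fix J assume J: "idl3 J" and sub: "{(u, v, w). (v, w) \<in> pi2 la ra y} \<subseteq> J"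
  show "H1 (pi2 la ra y) \<subseteq> J"
  proof (clarsimp simp: H1_def pi2_eq)
    fix u v w assume "la (tau (mult u v)) w \<le> y"
    hence "(u, la (tau u) v, w) \<in> J" using sub by (auto simp: pi2_eq tau_mult)
    hence "(ra u (tau u), v, w) \<in> J" using i3_sat1[OF J] by blast
    thus "(u, v, w) \<in> J" by (simp add: ra_tau_self)
  qed
qed

lemma H2_pi1: "H2 (pi1 la ra x) = p12 la ra (pi1 la ra x)"
proof (rule sym, rule p12_char)
  show "idl3 (H2 (pi1 la ra x))" by (rule H2_idl3[OF pi1_idl])
  show "{(u, v, w). (u, v) \<in> pi1 la ra x} \<subseteq> H2 (pi1 la ra x)"
  proof (clarsimp simp: H2_def pi1_eq)
    fix u v w assume "ra u (supp v) \<le> x"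
    thus "ra u (supp (mult v w)) \<le> x" using ra_mono[OF order_refl[of u] supp_mult_le[of v w]] by simp
  qed
  fix J assume J: "idl3 J" and sub: "{(u, v, w). (u, v) \<in> pi1 la ra x} \<subseteq> J"
  show "H2 (pi1 la ra x) \<subseteq> J"
  proof (clarsimp simp: H2_def pi1_eq)
    fix u v w assume "ra u (supp (mult v w)) \<le> x"
    hence "(u, ra v (supp w), w) \<in> J" using sub by (auto simp: pi1_eq supp_mult)
    hence "(u, v, la (supp w) w) \<in> J" using i3_sat2[OF J] by blast
    thus "(u, v, w) \<in> J" by (simp add: supp_self)
  qed
qed

lemma H2_pi2: "H2 (pi2 la ra y) = p23 la ra (RR y)"
proof (rule sym, rule p23_char)
  show "idl3 (H2 (pi2 la ra y))" by (rule H2_idl3[OF pi2_idl])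
  show "{(u, v, w). (v, w) \<in> RR y} \<subseteq> H2 (pi2 la ra y)"
  proof (clarsimp simp: H2_def pi2_eq RR_def)
    fix u v w assume "mult v w \<le> y"
    thus "la (tau u) (mult v w) \<le> y" using la_le[of "tau u" "mult v w"] by simp
  qed
  fix J assume J: "idl3 J" and sub: "{(u, v, w). (v, w) \<in> RR y} \<subseteq> J"
  show "H2 (pi2 la ra y) \<subseteq> J"
  proof (clarsimp simp: H2_def pi2_eq)
    fix u v w assume "la (tau u) (mult v w) \<le> y"
    hence "(u, la (tau u) v, w) \<in> J" using sub by (auto simp: RR_def mult_la)
    hence "(ra u (tau u), v, w) \<in> J" using i3_sat1[OF J] by blast
    thus "(u, v, w) \<in> J" by (simp add: ra_tau_self)
  qed
qed

end



context BQF begin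

lemma L_dS_hom: "frame_hom UNIV UNIV (dS la)"
proof (rule frame_homI)
  show "dS la top = top" by (simp add: dS_def)
  fix a b :: 'a show "dS la (inf a b) = inf (dS la a) (dS la b)"
    unfolding dS_def by (metis la_eq la_inf)
next
  fix S :: "'a set" show "dS la (cjoin UNIV S) = cjoin UNIV (dS la ` S)"
    unfolding cjoin_UNIV dS_def by (simp add: la_SupL)
qed simp

lemma L_mS_hom: "frame_hom UNIV (G2 la ra) (mS la ra mult)"
proof (rule frame_homI)
  fix x show "mS la ra mult x \<in> G2 la ra" by (simp add: RR_eq G2_iff RR_idl)
next
  show "mS la ra mult top = top" by (auto simp: RR_eq RR_def)
next
  fix a b show "mS la ra mult (inf a b) = inf (mS la ra mult a) (mS la ra mult b)"
    by (auto simp: RR_eq RR_def)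
next
  fix S :: "'q set" show "mS la ra mult (cjoin UNIV S) = cjoin (G2 la ra) (mS la ra mult ` S)"
    unfolding cjoin_UNIV RR_eq by (rule RR_Sup)
qed

lemma star_inf: "star (inf x y) = inf (star x) (star y)"
proof (rule antisym)
  show "star (inf x y) \<le> inf (star x) (star y)" by (simp add: star_mono)
  have "star (inf (star x) (star y)) \<le> inf x y"
    by (metis le_inf_iff order_refl star_le_iff2 star_star inf.cobounded1 inf.cobounded2)
  thus "inf (star x) (star y) \<le> star (inf x y)" by (metis star_le_iff2)
qed

lemma L_star_hom: "frame_hom UNIV UNIV star"
  by (rule frame_homI) (auto simp: star_inf cjoin_UNIV star_Sup)

lemma L_ud: "ups \<circ> dS la = id" by (auto simp: dS_def)
lemma L_ur: "ups \<circ> (star \<circ> dS la) = id" by (auto simp: dS_def star_la)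

lemma L_md: "mS la ra mult \<circ> dS la = pi1 la ra \<circ> dS la"
proof (rule ext)
  fix a
  have "mult u v \<le> la a top \<longleftrightarrow> ra u (supp v) \<le> la a top" for u v
    by (simp add: supp_adj[symmetric] supp_mult)
  thus "(mS la ra mult \<circ> dS la) a = (pi1 la ra \<circ> dS la) a"
    by (simp add: RR_eq RR_def pi1_eq dS_def)
qed

lemma L_mr: "mS la ra mult \<circ> (star \<circ> dS la) = pi2 la ra \<circ> (star \<circ> dS la)"
proof (rule ext)
  fix a
  have "mult u v \<le> ra top a \<longleftrightarrow> la (tau u) v \<le> ra top a" for u v
    by (simp add: tau_adj[symmetric] tau_mult)
  thus "(mS la ra mult \<circ> (star \<circ> dS la)) a = (pi2 la ra \<circ> (star \<circ> dS la)) a"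
    by (simp add: RR_eq RR_def pi2_eq dS_def star_la)
qed

lemma RR_G2: "RR a \<in> G2 la ra" by (simp add: G2_iff RR_idl)

lemma L_unit1: "induced_law (is_pairing (G2 la ra) (pi1 la ra) (pi2 la ra) (UNIV::'q set) (dS la \<circ> ups) id)
    (\<lambda>h. h \<circ> mS la ra mult = id)"
  unfolding induced_law_def
proof (intro conjI allI impI)
  show "\<exists>h. is_pairing (G2 la ra) (pi1 la ra) (pi2 la ra) UNIV (dS la \<circ> ups) id h"
    by (rule exI[of _ h0]) (auto simp: is_pairing_def h0_hom h0_pi1 h0_pi2 dS_def)
next
  fix h assume "is_pairing (G2 la ra) (pi1 la ra) (pi2 la ra) UNIV (dS la \<circ> ups) id h"
  hence h: "frame_hom (G2 la ra) UNIV h" "\<And>x. h (pi1 la ra x) = la (ups x) top" "\<And>y. h (pi2 la ra y) = y"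
    unfolding is_pairing_def dS_def by (auto dest: fun_cong)
  show "h \<circ> mS la ra mult = id"
  proof
    fix a
    have "h (RR a) = Sup {inf (h (pi1 la ra x)) (h (pi2 la ra y)) |x y. (x, y) \<in> RR a}"
      using pair_formula[OF h(1) RR_G2] by (simp add: cjoin_UNIV)
    also have "{inf (h (pi1 la ra x)) (h (pi2 la ra y)) |x y. (x, y) \<in> RR a} = {la (ups x) y | x y. mult x y \<le> a}"
      by (simp add: h(2,3) RR_def la_eq[symmetric])
    finally show "(h \<circ> mS la ra mult) a = id a" by (simp add: RR_eq unitlaw)
  qed
qed

lemma L_unit2: "induced_law (is_pairing (G2 la ra) (pi1 la ra) (pi2 la ra) (UNIV::'q set) id ((star \<circ> dS la) \<circ> ups))
    (\<lambda>h. h \<circ> mS la ra mult = id)"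
  unfolding induced_law_def
proof (intro conjI allI impI)
  show "\<exists>h. is_pairing (G2 la ra) (pi1 la ra) (pi2 la ra) UNIV id ((star \<circ> dS la) \<circ> ups) h"
    by (rule exI[of _ h0']) (auto simp: is_pairing_def h0'_hom h0'_pi1 h0'_pi2 dS_def star_la)
next
  fix h assume "is_pairing (G2 la ra) (pi1 la ra) (pi2 la ra) UNIV id ((star \<circ> dS la) \<circ> ups) h"
  hence h: "frame_hom (G2 la ra) UNIV h" "\<And>x. h (pi1 la ra x) = x" "\<And>y. h (pi2 la ra y) = ra top (ups y)"
    unfolding is_pairing_def dS_def by (auto dest: fun_cong simp: star_la)
  show "h \<circ> mS la ra mult = id"
  proof
    fix a
    have "h (RR a) = Sup {inf (h (pi1 la ra x)) (h (pi2 la ra y)) |x y. (x, y) \<in> RR a}"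
      using pair_formula[OF h(1) RR_G2] by (simp add: cjoin_UNIV)
    also have "{inf (h (pi1 la ra x)) (h (pi2 la ra y)) |x y. (x, y) \<in> RR a} = {ra x (ups y) | x y. mult x y \<le> a}"
    proof -
      have eq: "\<And>x y. inf x (ra top (ups y)) = ra x (ups y)" by (metis ra_eq inf_commute)
      show ?thesis by (simp add: h(2,3) RR_def eq)
    qed
    finally show "(h \<circ> mS la ra mult) a = id a" by (simp add: RR_eq unitlaw_right)
  qed
qed

lemma L_h1: "\<exists>h1. is_pairing (G2 la ra) (pi1 la ra) (pi2 la ra) (G3 la ra) (p12 la ra \<circ> mS la ra mult) (p23 la ra \<circ> pi2 la ra) h1"
  by (rule exI[of _ H1]) (auto simp: is_pairing_def H1_hom H1_pi1 H1_pi2 RR_eq)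

lemma L_h2: "\<exists>h2. is_pairing (G2 la ra) (pi1 la ra) (pi2 la ra) (G3 la ra) (p12 la ra \<circ> pi1 la ra) (p23 la ra \<circ> mS la ra mult) h2"
  by (rule exI[of _ H2]) (auto simp: is_pairing_def H2_hom H2_pi1 H2_pi2 RR_eq)

lemma L_assoc: "\<forall>h1 h2. is_pairing (G2 la ra) (pi1 la ra) (pi2 la ra) (G3 la ra) (p12 la ra \<circ> mS la ra mult) (p23 la ra \<circ> pi2 la ra) h1 \<longrightarrow>
                is_pairing (G2 la ra) (pi1 la ra) (pi2 la ra) (G3 la ra) (p12 la ra \<circ> pi1 la ra) (p23 la ra \<circ> mS la ra mult) h2 \<longrightarrow>
                h1 \<circ> mS la ra mult = h2 \<circ> mS la ra mult"
proof (intro allI impI ext)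
  fix h1 h2 a
  assume p1: "is_pairing (G2 la ra) (pi1 la ra) (pi2 la ra) (G3 la ra) (p12 la ra \<circ> mS la ra mult) (p23 la ra \<circ> pi2 la ra) h1"
    and p2: "is_pairing (G2 la ra) (pi1 la ra) (pi2 la ra) (G3 la ra) (p12 la ra \<circ> pi1 la ra) (p23 la ra \<circ> mS la ra mult) h2"
  have e1: "h1 (RR a) = H1 (RR a)"
  proof (rule pair_unique[OF _ H1_hom _ _ RR_G2])
    show "frame_hom (G2 la ra) (G3 la ra) h1" using p1 by (simp add: is_pairing_def)
    fix x show "h1 (pi1 la ra x) = H1 (pi1 la ra x)" using p1 unfolding is_pairing_def
      by (auto simp: H1_pi1 RR_eq dest: fun_cong[where x=x])
  next
    fix y show "h1 (pi2 la ra y) = H1 (pi2 la ra y)" using p1 unfolding is_pairing_def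
      by (auto simp: H1_pi2 dest: fun_cong[where x=y])
  qed
  have e2: "h2 (RR a) = H2 (RR a)"
  proof (rule pair_unique[OF _ H2_hom _ _ RR_G2])
    show "frame_hom (G2 la ra) (G3 la ra) h2" using p2 by (simp add: is_pairing_def)
    fix x show "h2 (pi1 la ra x) = H2 (pi1 la ra x)" using p2 unfolding is_pairing_def
      by (auto simp: H2_pi1 dest: fun_cong[where x=x])
  next
    fix y show "h2 (pi2 la ra y) = H2 (pi2 la ra y)" using p2 unfolding is_pairing_def
      by (auto simp: H2_pi2 RR_eq dest: fun_cong[where x=y])
  qed
  show "(h1 \<circ> mS la ra mult) a = (h2 \<circ> mS la ra mult) a"
    using e1 e2 by (simp add: RR_eq H1_def H2_def RR_def mult_assoc)
qed

lemma L_ii: "star \<circ> star = id" by auto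

definition hsw where "hsw I = {(x, y). (star y, star x) \<in> I}"

lemma hsw_idl: assumes I: "idl I" shows "idl (hsw I)"
proof (rule idlI)
  fix x y x' y' assume "(x, y) \<in> hsw I" "x' \<le> x" "y' \<le> y"
  thus "(x', y') \<in> hsw I" unfolding hsw_def using idl_down[OF I] star_mono by blast
next
  fix X y assume h: "\<And>x. x \<in> X \<Longrightarrow> (x, y) \<in> hsw I"
  have "(star y, Sup (star ` X)) \<in> I" by (rule idl_supR[OF I]) (use h in \<open>auto simp: hsw_def\<close>)
  thus "(Sup X, y) \<in> hsw I" by (simp add: hsw_def star_Sup)
next
  fix x Y assume h: "\<And>y. y \<in> Y \<Longrightarrow> (x, y) \<in> hsw I"
  have "(Sup (star ` Y), star x) \<in> I" by (rule idl_supL[OF I]) (use h in \<open>auto simp: hsw_def\<close>)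
  thus "(x, Sup Y) \<in> hsw I" by (simp add: hsw_def star_Sup)
next
  fix x a y show "(ra x a, y) \<in> hsw I \<longleftrightarrow> (x, la a y) \<in> hsw I"
    unfolding hsw_def by (simp add: star_ra star_la idl_sat[OF I])
qed

lemma hsw_hsw[simp]: "hsw (hsw I) = I" by (auto simp: hsw_def)
lemma hsw_mono: "I \<subseteq> J \<Longrightarrow> hsw I \<subseteq> hsw J" by (auto simp: hsw_def)

lemma hsw_hom: "frame_hom (G2 la ra) (G2 la ra) hsw"
proof (rule frame_homI)
  fix I assume "I \<in> G2 la ra" thus "hsw I \<in> G2 la ra" by (simp add: G2_iff hsw_idl)
next
  show "hsw top = top" by (auto simp: hsw_def)
next
  fix I J show "hsw (inf I J) = inf (hsw I) (hsw J)" by (auto simp: hsw_def)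
next
  fix S assume S: "S \<subseteq> G2 la ra"
  define C where "C = cjoin (G2 la ra) (hsw ` S)"
  have cs: "cjoin (G2 la ra) S \<subseteq> hsw C"
  proof (rule cjoin_G2_least)
    show "idl (hsw C)" unfolding C_def by (rule hsw_idl[OF idl_cjoin])
    fix s assume "s \<in> S"
    hence "hsw s \<subseteq> C" unfolding C_def by (intro cjoin_upper) blast
    thus "s \<subseteq> hsw C" using hsw_mono[OF \<open>hsw s \<subseteq> C\<close>] by simp
  qed
  have "hsw (cjoin (G2 la ra) S) \<subseteq> C" using hsw_mono[OF cs] by simp
  moreover have "C \<subseteq> hsw (cjoin (G2 la ra) S)" unfolding C_def
  proof (rule cjoin_G2_least[OF hsw_idl[OF idl_cjoin]])
    fix s assume "s \<in> hsw ` S"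
    then obtain s' where "s' \<in> S" "s = hsw s'" by blast
    thus "s \<subseteq> hsw (cjoin (G2 la ra) S)" by (simp add: hsw_mono cjoin_upper)
  qed
  ultimately show "hsw (cjoin (G2 la ra) S) = cjoin (G2 la ra) (hsw ` S)" unfolding C_def by blast
qed

lemma hsw_pi1: "hsw (pi1 la ra x) = pi2 la ra (star x)"
proof -
  have eq: "\<And>u v. ra (star v) (supp (star u)) \<le> x \<longleftrightarrow> la (tau u) v \<le> star x"
    by (metis star_le_iff2 star_la tau_def)
  show ?thesis unfolding hsw_def pi1_eq pi2_eq by (simp add: eq)
qed
lemma hsw_pi2: "hsw (pi2 la ra y) = pi1 la ra (star y)"
proof -
  have eq: "\<And>u v. la (tau (star v)) (star u) \<le> y \<longleftrightarrow> ra u (supp v) \<le> star y"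
    by (metis star_le_iff2 star_ra tau_def star_star)
  show ?thesis unfolding hsw_def pi1_eq pi2_eq by (simp add: eq)
qed

lemma L_inv: "induced_law (is_pairing (G2 la ra) (pi1 la ra) (pi2 la ra) (G2 la ra) (pi2 la ra \<circ> star) (pi1 la ra \<circ> star))
    (\<lambda>h. mS la ra mult \<circ> star = h \<circ> mS la ra mult)"
  unfolding induced_law_def
proof (intro conjI allI impI)
  show "\<exists>h. is_pairing (G2 la ra) (pi1 la ra) (pi2 la ra) (G2 la ra) (pi2 la ra \<circ> star) (pi1 la ra \<circ> star) h"
    by (rule exI[of _ hsw]) (auto simp: is_pairing_def hsw_hom hsw_pi1 hsw_pi2)
next
  fix h assume p: "is_pairing (G2 la ra) (pi1 la ra) (pi2 la ra) (G2 la ra) (pi2 la ra \<circ> star) (pi1 la ra \<circ> star) h"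
  show "mS la ra mult \<circ> star = h \<circ> mS la ra mult"
  proof
    fix a
    have "h (RR a) = hsw (RR a)"
    proof (rule pair_unique[OF _ hsw_hom _ _ RR_G2])
      show "frame_hom (G2 la ra) (G2 la ra) h" using p by (simp add: is_pairing_def)
      fix x show "h (pi1 la ra x) = hsw (pi1 la ra x)" using p unfolding is_pairing_def
        by (auto simp: hsw_pi1 dest: fun_cong[where x=x])
    next
      fix y show "h (pi2 la ra y) = hsw (pi2 la ra y)" using p unfolding is_pairing_def
        by (auto simp: hsw_pi2 dest: fun_cong[where x=y])
    qed
    moreover have "hsw (RR a) = RR (star a)"
    proof -
      have eq: "\<And>x y. mult (star y) (star x) \<le> a \<longleftrightarrow> mult x y \<le> star a"
        by (metis star_mult star_le_iff2)
      show ?thesis unfolding hsw_def RR_def by (simp add: eq)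
    qed
    ultimately show "(mS la ra mult \<circ> star) a = (h \<circ> mS la ra mult) a" by (simp add: RR_eq)
  qed
qed

lemma L_open: "open_map (dS la)"
  unfolding open_map_def
proof (rule exI[of _ supp], intro conjI allI)
  fix x a show "supp x \<le> a \<longleftrightarrow> x \<le> dS la a" by (simp add: dS_def supp_adj)
next
  fix x a show "supp (inf x (dS la a)) = inf (supp x) a"
  proof -
    have "inf x (la a top) = la a x" by (metis la_eq inf_commute)
    thus ?thesis by (simp add: dS_def supp_la inf_commute)
  qed
qed

end

theorem lemma5p2:
  fixes la :: "'a::complete_lattice \<Rightarrow> 'q::complete_lattice \<Rightarrow> 'q"
    and ra :: "'q \<Rightarrow> 'a \<Rightarrow> 'q"
    and mult :: "'q \<Rightarrow> 'q \<Rightarrow> 'q"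
    and star :: "'q \<Rightarrow> 'q"
    and supp :: "'q \<Rightarrow> 'a"
    and ups :: "'q \<Rightarrow> 'a"
  assumes "is_frame TYPE('a)"
    and "based_quantal_frame la ra mult star"
    and "support la mult star supp"
    and "equivariant_support la supp"
    and "reflexive_bqf la ra ups"
    and "multiplicative la ra mult"
    and "unit_laws la mult ups"
  shows "open_involutive_category (G2 la ra) (pi1 la ra) (pi2 la ra) (G3 la ra) (p12 la ra) (p23 la ra)
           (dS la) ups (mS la ra mult) star"
proof -
  interpret BQF la ra mult star supp ups by (rule BQF.intro) (rule assms)+
  show ?thesis
    unfolding open_involutive_category_def Let_def
    by (intro conjI L_dS_hom ups_hom L_mS_hom L_star_hom L_ud L_ur L_md L_mr L_unit1 L_unit2 L_h1 L_h2 L_assoc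
      L_ii L_inv L_open refl)
qed



end
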